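(* Let $A$ be a unital $C^*$-algebra such that for every nonzero projection $e\in A$ the hereditary $C^*$-subalgebra $eAe$ is infinite dimensional. Let $b\in A^+$ with $\|b\|=1$ and let $\epsilon>0$. Then for every integer $n\ge1$ there exist $b_1,\dots,b_n\in A^+$ with $\|b_j\|=1$, $bb_j=b_jb$, $\|bb_j\|\ge 1-\epsilon$ for all $j$, and $b_ib_j=0$ for $i\ne j$. *)

theory Defs
  imports "HOL-Analysis.Analysis"
begin

text \<open>A unital C*-algebra: a unital real Banach algebra (norm of the unit is 1)
  equipped with a complex scalar multiplication extending the real one,
  compatible with norm and multiplication, and an involution satisfying the
  C*-identity.\<close>

locale unital_cstar_algebra =
  fixes scaleC :: "complex \<Rightarrow> 'a::{real_normed_algebra_1, banach} \<Rightarrow> 'a"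
    and star :: "'a \<Rightarrow> 'a"
  assumes scaleC_of_real: "\<And>r x. scaleC (complex_of_real r) x = r *\<^sub>R x"
    and scaleC_add_left: "\<And>a b x. scaleC (a + b) x = scaleC a x + scaleC b x"
    and scaleC_add_right: "\<And>a x y. scaleC a (x + y) = scaleC a x + scaleC a y"
    and scaleC_scaleC: "\<And>a b x. scaleC a (scaleC b x) = scaleC (a * b) x"
    and norm_scaleC: "\<And>a x. norm (scaleC a x) = cmod a * norm x"
    and scaleC_mult_left: "\<And>a x y. scaleC a (x * y) = scaleC a x * y"
    and scaleC_mult_right: "\<And>a x y. scaleC a (x * y) = x * scaleC a y"
    and star_star: "\<And>x. star (star x) = x"
    and star_add: "\<And>x y. star (x + y) = star x + star y"
    and star_scaleC: "\<And>a x. star (scaleC a x) = scaleC (cnj a) (star x)"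
    and star_mult: "\<And>x y. star (x * y) = star y * star x"
    and cstar_identity: "\<And>x. norm (star x * x) = norm x ^ 2"

definition invertible_elem :: "'a::ring_1 \<Rightarrow> bool" where
  "invertible_elem a \<longleftrightarrow> (\<exists>y. a * y = 1 \<and> y * a = 1)"

definition cspectrum :: "(complex \<Rightarrow> 'a::ring_1 \<Rightarrow> 'a) \<Rightarrow> 'a \<Rightarrow> complex set" where
  "cspectrum scaleC a = {l. \<not> invertible_elem (a - scaleC l 1)}"

definition positive_elem :: "(complex \<Rightarrow> 'a::ring_1 \<Rightarrow> 'a) \<Rightarrow> ('a \<Rightarrow> 'a) \<Rightarrow> 'a \<Rightarrow> bool" where
  "positive_elem scaleC star a \<longleftrightarrow>
     star a = a \<and> (\<forall>l\<in>cspectrum scaleC a. Im l = 0 \<and> Re l \<ge> 0)"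

definition projection_elem :: "('a::ring_1 \<Rightarrow> 'a) \<Rightarrow> 'a \<Rightarrow> bool" where
  "projection_elem star e \<longleftrightarrow> star e = e \<and> e * e = e"

definition corner :: "'a::ring_1 \<Rightarrow> 'a set" where
  "corner e = {e * x * e | x. True}"

definition cspan_fin :: "(complex \<Rightarrow> 'a::ring_1 \<Rightarrow> 'a) \<Rightarrow> 'a set \<Rightarrow> 'a set" where
  "cspan_fin scaleC S = {\<Sum>s\<in>S. scaleC (c s) s | c. True}"

definition cinfinite_dim :: "(complex \<Rightarrow> 'a::ring_1 \<Rightarrow> 'a) \<Rightarrow> 'a set \<Rightarrow> bool" where
  "cinfinite_dim scaleC V \<longleftrightarrow> \<not> (\<exists>S. finite S \<and> S \<subseteq> V \<and> V \<subseteq> cspan_fin scaleC S)"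

end

theory Submission
  imports Defs "HOL-Computational_Algebra.Fundamental_Theorem_Algebra"
begin

section \<open>Generic Banach algebra facts\<close>

definition ainv :: "'a::ring_1 \<Rightarrow> 'a" where
  "ainv a = (SOME y. a * y = 1 \<and> y * a = 1)"

lemma ainv:
  assumes "invertible_elem a"
  shows "a * ainv a = 1" "ainv a * a = 1"
proof -
  have "\<exists>y. a * y = 1 \<and> y * a = 1" using assms unfolding invertible_elem_def by blast
  then have "a * ainv a = 1 \<and> ainv a * a = 1" unfolding ainv_def by (rule someI_ex)
  then show "a * ainv a = 1" "ainv a * a = 1" by auto
qed

lemma ainv_unique:
  fixes a y :: "'a::ring_1"
  assumes "a * y = 1" "y * a = 1"
  shows "ainv a = y"
proof -
  have inv: "invertible_elem a" using assms unfolding invertible_elem_def by blast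
  have "ainv a = ainv a * (a * y)" using assms by simp
  also have "\<dots> = (ainv a * a) * y" by (simp add: mult.assoc)
  also have "\<dots> = y" using ainv[OF inv] by simp
  finally show ?thesis .
qed

lemma invertibleI: "(a::'a::ring_1) * y = 1 \<Longrightarrow> y * a = 1 \<Longrightarrow> invertible_elem a"
  unfolding invertible_elem_def by blast

lemma invertible_one[simp]: "invertible_elem (1::'a::ring_1)"
  by (rule invertibleI[of _ 1]) simp_all

lemma invertible_mult:
  fixes a b :: "'a::ring_1"
  assumes "invertible_elem a" "invertible_elem b"
  shows "invertible_elem (a * b)"
proof (rule invertibleI[of _ "ainv b * ainv a"])
  have "a * b * (ainv b * ainv a) = a * (b * ainv b) * ainv a" by (simp add: mult.assoc)
  then show "a * b * (ainv b * ainv a) = 1" using ainv[OF assms(1)] ainv[OF assms(2)] by simp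
  have "ainv b * ainv a * (a * b) = ainv b * (ainv a * a) * b" by (simp add: mult.assoc)
  then show "ainv b * ainv a * (a * b) = 1" using ainv[OF assms(1)] ainv[OF assms(2)] by simp
qed

lemma invertible_ainv:
  assumes "invertible_elem (a::'a::ring_1)" shows "invertible_elem (ainv a)"
  using ainv[OF assms] by (intro invertibleI[of _ a]) auto

lemma ainv_commute:
  fixes a c :: "'a::ring_1"
  assumes "invertible_elem a" "a * c = c * a"
  shows "ainv a * c = c * ainv a"
proof -
  have "ainv a * c = ainv a * c * (a * ainv a)" using ainv[OF assms(1)] by simp
  also have "\<dots> = ainv a * (c * a) * ainv a" by (simp add: mult.assoc)
  also have "\<dots> = ainv a * (a * c) * ainv a" using assms(2) by simp
  also have "\<dots> = (ainv a * a) * c * ainv a" by (simp add: mult.assoc)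
  also have "\<dots> = c * ainv a" using ainv[OF assms(1)] by simp
  finally show ?thesis .
qed

lemma neumann:
  fixes z :: "'a::{real_normed_algebra_1, banach}"
  assumes "norm z < 1"
  shows "invertible_elem (1 - z)" "norm (ainv (1 - z)) \<le> 1 / (1 - norm z)"
proof -
  have nsum: "summable (\<lambda>n. norm z ^ n)" using assms by (simp add: summable_geometric)
  have bnd: "norm (z ^ n) \<le> norm z ^ n" for n by (rule norm_power_ineq)
  have ns: "summable (\<lambda>n. norm (z ^ n))"
    by (rule summable_comparison_test[OF _ nsum]) (auto intro: bnd)
  then have sm: "summable (\<lambda>n. z ^ n)" by (rule summable_norm_cancel)
  define s where "s = (\<Sum>n. z ^ n)"
  have sh: "(\<Sum>n. z ^ Suc n) = s - 1"
    using suminf_split_head[OF sm] unfolding s_def by simp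
  have l: "z * s = s - 1"
    using suminf_mult[OF sm, of z] sh unfolding s_def by (simp add: power_Suc)
  have r: "s * z = s - 1"
  proof -
    have "s * z = (\<Sum>n. z ^ n * z)" using suminf_mult2[OF sm, of z] unfolding s_def .
    also have "(\<lambda>n. z ^ n * z) = (\<lambda>n. z ^ Suc n)" by (simp only: power_Suc2)
    finally show ?thesis using sh by simp
  qed
  have e1: "(1 - z) * s = 1" using l by (simp add: algebra_simps)
  have e2: "s * (1 - z) = 1" using r by (simp add: algebra_simps)
  show "invertible_elem (1 - z)" using e1 e2 by (rule invertibleI)
  have "ainv (1 - z) = s" using e1 e2 by (rule ainv_unique)
  moreover have "norm s \<le> 1 / (1 - norm z)"
  proof -
    have "norm s \<le> (\<Sum>n. norm (z ^ n))" unfolding s_def by (rule summable_norm[OF ns])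
    also have "\<dots> \<le> (\<Sum>n. norm z ^ n)" by (rule suminf_le[OF bnd ns nsum])
    also have "\<dots> = 1 / (1 - norm z)" using assms by (simp add: suminf_geometric)
    finally show ?thesis .
  qed
  ultimately show "norm (ainv (1 - z)) \<le> 1 / (1 - norm z)" by simp
qed

lemma inv_perturb:
  fixes a d :: "'a::{real_normed_algebra_1, banach}"
  assumes inv: "invertible_elem a" and small: "norm (ainv a) * norm d < 1"
  shows "invertible_elem (a + d)"
    "norm (ainv (a + d) - ainv a) \<le> norm (ainv a) ^ 2 * norm d / (1 - norm (ainv a) * norm d)"
proof -
  define u where "u = ainv a"
  define z where "z = - (u * d)"
  have nz: "norm z \<le> norm u * norm d" unfolding z_def by (simp add: norm_mult_ineq)
  then have nz1: "norm z < 1" using small unfolding u_def by linarith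
  define w where "w = ainv (1 - z)"
  have w: "(1 - z) * w = 1" "w * (1 - z) = 1" using ainv[OF neumann(1)[OF nz1]] unfolding w_def by auto
  have nw: "norm w \<le> 1 / (1 - norm z)" using neumann(2)[OF nz1] unfolding w_def .
  have au: "a * u = 1" "u * a = 1" using ainv[OF inv] unfolding u_def by auto
  have ad: "a + d = a * (1 - z)" unfolding z_def
    by (simp add: algebra_simps flip: mult.assoc) (simp add: au)
  have ud: "u * (a + d) = 1 - z" unfolding z_def by (simp add: algebra_simps flip: mult.assoc) (simp add: au)
  have e1: "(a + d) * (w * u) = 1"
  proof -
    have "(a + d) * (w * u) = a * ((1 - z) * w) * u" unfolding ad by (simp add: mult.assoc)
    then show ?thesis using w au by simp
  qed
  have e2: "(w * u) * (a + d) = 1"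
  proof -
    have "(w * u) * (a + d) = w * (u * (a + d))" by (simp add: mult.assoc)
    then show ?thesis using ud w by simp
  qed
  show "invertible_elem (a + d)" using e1 e2 by (rule invertibleI)
  have ai: "ainv (a + d) = w * u" using e1 e2 by (rule ainv_unique)
  have "w * u - u = (w * z) * u"
  proof -
    have wz: "w * z = w - 1" using w(2) by (simp add: algebra_simps)
    show ?thesis by (simp add: wz algebra_simps)
  qed
  then have "norm (ainv (a + d) - ainv a) = norm ((w * z) * u)" unfolding ai u_def by simp
  also have "\<dots> \<le> norm w * norm z * norm u" by (metis norm_mult_ineq mult_right_mono norm_ge_zero order_trans)
  also have "\<dots> \<le> (1 / (1 - norm z)) * (norm u * norm d) * norm u"
    using nz1 by (intro mult_mono nw nz) auto
  also have "\<dots> \<le> (1 / (1 - norm u * norm d)) * (norm u * norm d) * norm u"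
  proof -
    have "1 / (1 - norm z) \<le> 1 / (1 - norm u * norm d)"
      using nz nz1 small unfolding u_def by (intro divide_left_mono) (auto simp: mult_pos_pos)
    then show ?thesis by (intro mult_right_mono) auto
  qed
  also have "\<dots> = norm (ainv a) ^ 2 * norm d / (1 - norm (ainv a) * norm d)"
    unfolding u_def by (simp add: power2_eq_square)
  finally show "norm (ainv (a + d) - ainv a) \<le> norm (ainv a) ^ 2 * norm d / (1 - norm (ainv a) * norm d)" .
qed

lemma tendsto_ainv:
  fixes g :: "'b \<Rightarrow> 'a::{real_normed_algebra_1, banach}"
  assumes lim: "(g \<longlongrightarrow> a) F" and inv: "invertible_elem a"
  shows "((\<lambda>y. ainv (g y)) \<longlongrightarrow> ainv a) F"
proof -
  define u where "u = ainv a"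
  have u0: "norm u > 0"
  proof -
    have "a * u = 1" using ainv[OF inv] unfolding u_def by simp
    then have "u \<noteq> 0" by auto
    then show ?thesis by simp
  qed
  have ev: "eventually (\<lambda>y. norm (g y - a) < 1 / (2 * norm u)) F"
    using lim u0 unfolding tendsto_iff dist_norm by (auto)
  have "((\<lambda>y. ainv (g y) - ainv a) \<longlongrightarrow> 0) F"
  proof (rule Lim_null_comparison)
    show "eventually (\<lambda>y. norm (ainv (g y) - ainv a) \<le> 2 * norm u ^ 2 * norm (g y - a)) F"
      using ev
    proof eventually_elim
      case (elim y)
      define d where "d = g y - a"
      have s: "norm u * norm d < 1 / 2" using elim u0 unfolding d_def by (simp add: field_simps)
      have "norm (ainv (a + d) - ainv a) \<le> norm u ^ 2 * norm d / (1 - norm u * norm d)"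
        using inv_perturb(2)[OF inv] s unfolding u_def by simp
      also have "\<dots> \<le> norm u ^ 2 * norm d / (1 / 2)"
        using s by (intro divide_left_mono) auto
      finally show ?case unfolding d_def by simp
    qed
    have "((\<lambda>y. norm (g y - a)) \<longlongrightarrow> 0) F" using lim
      by (simp add: tendsto_norm_zero_iff Lim_null[symmetric])
    then show "((\<lambda>y. 2 * norm u ^ 2 * norm (g y - a)) \<longlongrightarrow> 0) F"
      by (simp add: tendsto_mult_right_zero)
  qed
  then show ?thesis unfolding u_def by (simp add: Lim_null[symmetric])
qed


lemma geom_telescope_left:
  fixes y :: "'a::ring_1"
  shows "(1 - y) * (\<Sum>j<n. y ^ j) = 1 - y ^ n"
proof (induction n)
  case (Suc n)
  have "(1 - y) * (\<Sum>j<Suc n. y ^ j) = (1 - y) * (\<Sum>j<n. y ^ j) + (1 - y) * y ^ n"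
    by (simp add: distrib_left)
  also have "\<dots> = 1 - y ^ Suc n" by (simp only: Suc.IH power_Suc) (simp add: algebra_simps)
  finally show ?case .
qed simp

lemma geom_telescope_right:
  fixes y :: "'a::ring_1"
  shows "(\<Sum>j<n. y ^ j) * (1 - y) = 1 - y ^ n"
proof (induction n)
  case (Suc n)
  have "(\<Sum>j<Suc n. y ^ j) * (1 - y) = (\<Sum>j<n. y ^ j) * (1 - y) + y ^ n * (1 - y)"
    by (simp add: distrib_right)
  also have "\<dots> = 1 - y ^ Suc n" by (simp only: Suc.IH power_Suc2) (simp add: algebra_simps)
  finally show ?case .
qed simp

lemma roots_unity_sum:
  fixes N j :: nat
  assumes "N \<ge> 1" "0 < j" "j < N"
  shows "(\<Sum>k<N. exp (2 * of_real pi * \<i> * of_nat k / of_nat N) ^ j) = (0::complex)"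
proof -
  define w where "w = exp (2 * of_real pi * \<i> * of_nat j / of_nat N)"
  have eq: "exp (2 * of_real pi * \<i> * of_nat k / of_nat N) ^ j = w ^ k" for k
  proof -
    have "exp (2 * of_real pi * \<i> * of_nat k / of_nat N) ^ j
        = exp (of_nat j * (2 * of_real pi * \<i> * of_nat k / of_nat N))"
      by (rule exp_of_nat_mult[symmetric])
    also have "\<dots> = exp (of_nat k * (2 * of_real pi * \<i> * of_nat j / of_nat N))"
      by (simp add: algebra_simps)
    also have "\<dots> = w ^ k" unfolding w_def by (rule exp_of_nat_mult)
    finally show ?thesis .
  qed
  have wN: "w ^ N = 1" unfolding w_def using assms complex_root_unity by simp
  have w1: "w \<noteq> 1" unfolding w_def using assms complex_root_unity_eq_1[of N j]
    by (auto dest: dvd_imp_le)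
  have "(\<Sum>k<N. w ^ k) = (w ^ N - 1) / (w - 1)" using w1 by (rule geometric_sum)
  then show ?thesis using wN by (simp add: eq)
qed

context unital_cstar_algebra
begin

subsection \<open>Basic calculus of complex scalars and the involution\<close>

lemma scaleC_one[simp]: "scaleC 1 x = x"
  using scaleC_of_real[of 1 x] by simp

lemma scaleC_zero_left[simp]: "scaleC 0 x = 0"
  using scaleC_of_real[of 0 x] by simp

lemma scaleC_zero_right[simp]: "scaleC a 0 = 0"
  using scaleC_add_right[of a 0 0] by simp

lemma scaleC_minus_left: "scaleC (- a) x = - scaleC a x"
  using scaleC_add_left[of "-a" a x] by (simp add: eq_neg_iff_add_eq_0)

lemma scaleC_minus_right: "scaleC a (- x) = - scaleC a x"
  using scaleC_add_right[of a "-x" x] by (simp add: eq_neg_iff_add_eq_0)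

lemma scaleC_diff_left: "scaleC (a - b) x = scaleC a x - scaleC b x"
  using scaleC_add_left[of a "-b" x] by (simp add: scaleC_minus_left)

lemma scaleC_diff_right: "scaleC a (x - y) = scaleC a x - scaleC a y"
  using scaleC_add_right[of a x "-y"] by (simp add: scaleC_minus_right)

lemma scaleC_mult_both: "scaleC a x * scaleC b y = scaleC (a * b) (x * y)"
proof -
  have "scaleC a x * scaleC b y = scaleC b (scaleC a x * y)" by (simp add: scaleC_mult_right)
  also have "\<dots> = scaleC b (scaleC a (x * y))" by (simp add: scaleC_mult_left)
  also have "\<dots> = scaleC (a * b) (x * y)" by (simp add: scaleC_scaleC mult.commute)
  finally show ?thesis .
qed

lemma scaleC_one_mult: "scaleC a 1 * x = scaleC a x"
  by (metis mult_1 scaleC_mult_left)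

lemma mult_scaleC_one: "x * scaleC a 1 = scaleC a x"
  by (metis mult_1_right scaleC_mult_right)

lemma scaleC_power: "(scaleC a x) ^ n = scaleC (a ^ n) (x ^ n)"
  by (induction n) (simp_all add: scaleC_mult_both)

lemma scaleC_sum_right: "scaleC a (sum f S) = (\<Sum>i\<in>S. scaleC a (f i))"
  by (induction S rule: infinite_finite_induct) (simp_all add: scaleC_add_right)

lemma scaleC_sum_left: "scaleC (sum f S) x = (\<Sum>i\<in>S. scaleC (f i) x)"
  by (induction S rule: infinite_finite_induct) (simp_all add: scaleC_add_left)

lemma norm_scaleC_real: "norm (scaleC (complex_of_real r) x) = \<bar>r\<bar> * norm x"
  by (simp add: norm_scaleC)

lemma star_zero[simp]: "star 0 = 0"
  using star_add[of 0 0] by simp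

lemma star_minus: "star (- x) = - star x"
  using star_add[of "-x" x] by (simp add: eq_neg_iff_add_eq_0)

lemma star_diff: "star (x - y) = star x - star y"
  using star_add[of x "-y"] by (simp add: star_minus)

lemma star_one[simp]: "star 1 = 1"
proof -
  have "star 1 = star 1 * 1" by simp
  also have "\<dots> = star 1 * star (star 1)" by (simp add: star_star)
  also have "\<dots> = star (star 1 * 1)" by (rule star_mult[symmetric])
  also have "\<dots> = 1" by (simp add: star_star)
  finally show ?thesis .
qed

lemma star_real_scale: "star (scaleC (complex_of_real r) x) = scaleC (complex_of_real r) (star x)"
  by (simp add: star_scaleC)

lemma star_sum: "star (sum f S) = (\<Sum>i\<in>S. star (f i))"
  by (induction S rule: infinite_finite_induct) (simp_all add: star_add)

lemma star_power: "star (x ^ n) = star x ^ n"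
  by (induction n) (simp_all add: star_mult power_commutes)

lemma norm_star_le: "norm x \<le> norm (star x)"
proof (cases "x = 0")
  case True then show ?thesis by simp
next
  case False
  have "norm x ^ 2 = norm (star x * x)" by (simp add: cstar_identity)
  also have "\<dots> \<le> norm (star x) * norm x" by (rule norm_mult_ineq)
  finally have "norm x * norm x \<le> norm (star x) * norm x" by (simp add: power2_eq_square)
  then show ?thesis using False by simp
qed

lemma norm_star[simp]: "norm (star x) = norm x"
  using norm_star_le[of x] norm_star_le[of "star x"] by (simp add: star_star)

lemma sa_norm_square: "star x = x \<Longrightarrow> norm (x * x) = norm x ^ 2"
  using cstar_identity[of x] by simp

lemma sa_power: "star x = x \<Longrightarrow> star (x ^ n) = x ^ n"
  by (simp add: star_power)

lemma sa_norm_pow2: "star x = x \<Longrightarrow> norm (x ^ (2 ^ k)) = norm x ^ (2 ^ k)"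
proof (induction k)
  case 0 then show ?case by simp
next
  case (Suc k)
  have "x ^ (2 ^ Suc k) = x ^ (2 ^ k) * x ^ (2 ^ k)"
    by (simp add: power_add[symmetric] mult_2)
  then have "norm (x ^ (2 ^ Suc k)) = norm (x ^ (2 ^ k)) ^ 2"
    using sa_norm_square[OF sa_power[OF Suc.prems]] by simp
  also have "\<dots> = norm x ^ (2 ^ Suc k)" using Suc by (simp add: power_mult[symmetric] mult.commute)
  finally show ?case .
qed

subsection \<open>Invertibility and spectrum\<close>

lemma invertible_scaleC:
  assumes "c \<noteq> 0" "invertible_elem y"
  shows "invertible_elem (scaleC c y)"
proof (rule invertibleI[of _ "scaleC (inverse c) (ainv y)"])
  show "scaleC c y * scaleC (inverse c) (ainv y) = 1"
    using assms ainv[OF assms(2)] by (simp add: scaleC_mult_both)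
  show "scaleC (inverse c) (ainv y) * scaleC c y = 1"
    using assms ainv[OF assms(2)] by (simp add: scaleC_mult_both)
qed

lemma invertible_scaleC_iff:
  assumes "c \<noteq> 0"
  shows "invertible_elem (scaleC c y) \<longleftrightarrow> invertible_elem y"
proof
  assume "invertible_elem (scaleC c y)"
  then have "invertible_elem (scaleC (inverse c) (scaleC c y))"
    using assms by (rule_tac invertible_scaleC) auto
  moreover have "scaleC (inverse c) (scaleC c y) = y" using assms by (simp add: scaleC_scaleC)
  ultimately show "invertible_elem y" by simp
next
  assume "invertible_elem y"
  then show "invertible_elem (scaleC c y)" using assms invertible_scaleC by blast
qed

abbreviation spec :: "'a \<Rightarrow> complex set" where
  "spec a \<equiv> cspectrum scaleC a"

lemma spec_iff: "l \<in> spec a \<longleftrightarrow> \<not> invertible_elem (a - scaleC l 1)"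
  unfolding cspectrum_def by simp

lemma spec_bound:
  assumes "l \<in> spec a"
  shows "cmod l \<le> norm a"
proof (rule ccontr)
  assume "\<not> cmod l \<le> norm a"
  then have big: "norm a < cmod l" by simp
  then have l0: "l \<noteq> 0" by auto
  have "norm (scaleC (inverse l) a) < 1"
    using big l0 by (simp add: norm_scaleC norm_inverse norm_divide field_simps)
  then have i1: "invertible_elem (1 - scaleC (inverse l) a)" by (rule neumann)
  have eq: "a - scaleC l 1 = scaleC (- l) (1 - scaleC (inverse l) a)"
    using l0 by (simp add: scaleC_diff_right scaleC_scaleC scaleC_minus_left)
  have "invertible_elem (a - scaleC l 1)"
    unfolding eq using l0 i1 by (intro invertible_scaleC) auto
  then show False using assms spec_iff by blast
qed

lemma spec_scale:
  assumes "c \<noteq> 0"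
  shows "l \<in> spec (scaleC c a) \<longleftrightarrow> l / c \<in> spec a"
proof -
  have "scaleC c a - scaleC l 1 = scaleC c (a - scaleC (l / c) 1)"
    using assms by (simp add: scaleC_diff_right scaleC_scaleC)
  then show ?thesis using invertible_scaleC_iff[OF assms] spec_iff by metis
qed

lemma sa_spec_real:
  assumes sa: "star h = h" and l: "l \<in> spec h"
  shows "Im l = 0"
proof (rule ccontr)
  assume b0: "Im l \<noteq> 0"
  define \<alpha> where "\<alpha> = Re l"
  define \<beta> where "\<beta> = Im l"
  define y where "y = h - scaleC (complex_of_real \<alpha>) 1"
  have ysa: "star y = y" unfolding y_def using sa by (simp add: star_diff star_scaleC)
  have key: "(\<beta> + t)\<^sup>2 \<le> norm y ^ 2 + t\<^sup>2" for t :: real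
  proof -
    define w where "w = y + scaleC (\<i> * complex_of_real t) 1"
    have "w - scaleC (\<i> * complex_of_real (\<beta> + t)) 1 = h - scaleC l 1"
    proof -
      have "l = complex_of_real \<alpha> + \<i> * complex_of_real \<beta>"
        unfolding \<alpha>_def \<beta>_def by (simp add: complex_eq_iff)
      then show ?thesis unfolding w_def y_def
        by (simp add: scaleC_add_left scaleC_diff_left algebra_simps distrib_left)
    qed
    then have "\<i> * complex_of_real (\<beta> + t) \<in> spec w" using l spec_iff by simp
    then have "cmod (\<i> * complex_of_real (\<beta> + t)) \<le> norm w" by (rule spec_bound)
    then have b1: "\<bar>\<beta> + t\<bar> \<le> norm w" by (simp add: norm_mult flip: of_real_add)
    have sw: "star w = y - scaleC (\<i> * complex_of_real t) 1"
      unfolding w_def by (simp add: star_add star_scaleC ysa scaleC_minus_left)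
    have "star w * w = y * y + scaleC (complex_of_real (t\<^sup>2)) 1"
    proof -
      have "star w * w = (y - scaleC (\<i> * complex_of_real t) 1) * (y + scaleC (\<i> * complex_of_real t) 1)"
        using sw by (simp add: w_def)
      also have "\<dots> = y * y + y * scaleC (\<i> * complex_of_real t) 1 - scaleC (\<i> * complex_of_real t) 1 * y
          - scaleC (\<i> * complex_of_real t) 1 * scaleC (\<i> * complex_of_real t) 1"
        by (simp add: algebra_simps)
      also have "\<dots> = y * y + scaleC (\<i> * complex_of_real t) y - scaleC (\<i> * complex_of_real t) y
          - scaleC (\<i> * complex_of_real t) 1 * scaleC (\<i> * complex_of_real t) 1"
        by (simp only: scaleC_one_mult mult_scaleC_one)
      also have "\<dots> = y * y + scaleC (complex_of_real (t\<^sup>2)) 1"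
        by (simp add: scaleC_mult_both power2_eq_square scaleC_minus_left[symmetric])
          (rule arg_cong[where f="\<lambda>c. scaleC c 1"], simp add: algebra_simps)
      finally show ?thesis .
    qed
    then have "norm w ^ 2 = norm (y * y + scaleC (complex_of_real (t\<^sup>2)) 1)"
      using cstar_identity[of w] by simp
    also have "\<dots> \<le> norm (y * y) + t\<^sup>2"
      using norm_triangle_ineq[of "y * y" "scaleC (complex_of_real (t\<^sup>2)) 1"]
      by (simp add: norm_scaleC norm_power)
    also have "\<dots> = norm y ^ 2 + t\<^sup>2" using sa_norm_square[OF ysa] by simp
    finally have "norm w ^ 2 \<le> norm y ^ 2 + t\<^sup>2" .
    moreover have "(\<beta> + t)\<^sup>2 \<le> norm w ^ 2"
      using b1 by (metis abs_ge_zero power2_abs power_mono)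
    ultimately show ?thesis by linarith
  qed
  define t where "t = (norm y ^ 2 + 1) / (2 * \<beta>)"
  have "2 * \<beta> * t = norm y ^ 2 + 1" unfolding t_def using b0 \<beta>_def by simp
  moreover have "(\<beta> + t)\<^sup>2 = \<beta>\<^sup>2 + 2 * \<beta> * t + t\<^sup>2" by (simp add: power2_eq_square algebra_simps)
  ultimately have "\<beta>\<^sup>2 + norm y ^ 2 + 1 + t\<^sup>2 \<le> norm y ^ 2 + t\<^sup>2" using key[of t] by linarith
  then show False by (smt (verit) zero_le_power2)
qed

lemma sa_square_positive:
  assumes sa: "star y = y"
  shows "positive_elem scaleC star (y * y)"
  unfolding positive_elem_def
proof (rule conjI)
  show "star (y * y) = y * y" by (simp add: star_mult sa)
next
  show "\<forall>l\<in>spec (y * y). Im l = 0 \<and> 0 \<le> Re l"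
  proof
  fix l assume l: "l \<in> spec (y * y)"
  show "Im l = 0 \<and> 0 \<le> Re l"
  proof (rule ccontr)
    assume nl: "\<not> (Im l = 0 \<and> 0 \<le> Re l)"
    define s where "s = csqrt l"
    have ss: "s * s = l" unfolding s_def by (metis power2_csqrt power2_eq_square)
    have sIm: "Im s \<noteq> 0"
    proof
      assume "Im s = 0"
      then have "Im l = 0 \<and> Re l = (Re s)\<^sup>2" using ss
        by (simp add: complex_eq_iff power2_eq_square flip: ss)
      then show False using nl by simp
    qed
    have i1: "invertible_elem (y - scaleC s 1)"
      using sa_spec_real[OF sa, of s] sIm spec_iff by blast
    have i2: "invertible_elem (y - scaleC (- s) 1)"
      using sa_spec_real[OF sa, of "-s"] sIm spec_iff by force
    have "(y - scaleC s 1) * (y - scaleC (- s) 1) =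
        y * y - y * scaleC (-s) 1 - scaleC s 1 * y + scaleC s 1 * scaleC (-s) 1"
      by (simp add: algebra_simps)
    also have "\<dots> = y * y - scaleC l 1"
      by (simp add: mult_scaleC_one scaleC_one_mult scaleC_scaleC scaleC_minus_left ss[symmetric])
    finally have "(y - scaleC s 1) * (y - scaleC (- s) 1) = y * y - scaleC l 1" .
    then have "invertible_elem (y * y - scaleC l 1)" using invertible_mult[OF i1 i2] by simp
    then show False using l spec_iff by blast
  qed
  qed
qed

end

lemma root_sum_scaled:
  fixes c :: complex
  assumes "N \<ge> 1" "j < N"
  shows "(\<Sum>k<N. (exp (2 * of_real pi * \<i> * of_nat k / of_nat N) * c) ^ j) = (if j = 0 then of_nat N else 0)"
proof (cases "j = 0")
  case True then show ?thesis by simp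
next
  case False
  have "(\<Sum>k<N. (exp (2 * of_real pi * \<i> * of_nat k / of_nat N) * c) ^ j)
      = c ^ j * (\<Sum>k<N. exp (2 * of_real pi * \<i> * of_nat k / of_nat N) ^ j)"
    by (simp add: power_mult_distrib sum_distrib_left mult.commute)
  also have "\<dots> = 0" using roots_unity_sum[of N j] assms False by simp
  finally show ?thesis using False by simp
qed

context unital_cstar_algebra
begin

lemma tendsto_scaleC_left:
  assumes "(f \<longlongrightarrow> c) F"
  shows "((\<lambda>y. scaleC (f y) x) \<longlongrightarrow> scaleC c x) F"
proof -
  have "((\<lambda>y. scaleC (f y) x - scaleC c x) \<longlongrightarrow> 0) F"
  proof (rule Lim_null_comparison)
    show "eventually (\<lambda>y. norm (scaleC (f y) x - scaleC c x) \<le> cmod (f y - c) * norm x) F"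
      by (simp add: scaleC_diff_left[symmetric] norm_scaleC)
    have "((\<lambda>y. cmod (f y - c)) \<longlongrightarrow> 0) F"
      using assms by (simp add: tendsto_norm_zero_iff Lim_null[symmetric])
    then show "((\<lambda>y. cmod (f y - c) * norm x) \<longlongrightarrow> 0) F"
      by (simp add: tendsto_mult_left_zero)
  qed
  then show ?thesis by (simp add: Lim_null[symmetric])
qed

lemma gelfand_lite:
  assumes inv: "\<And>l. cmod l \<le> 1 \<Longrightarrow> invertible_elem (1 - scaleC l x)"
  shows "\<exists>N0. \<forall>N\<ge>N0. norm (x ^ N) \<le> 1/2"
proof -
  define D where "D = cball (0::complex) 1"
  define \<phi> where "\<phi> l = ainv (1 - scaleC l x)" for l
  have cont: "continuous_on D \<phi>"
    unfolding continuous_on_def \<phi>_def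
  proof
    fix l assume "l \<in> D"
    then have l1: "cmod l \<le> 1" by (simp add: D_def)
    have "((\<lambda>m. 1 - scaleC m x) \<longlongrightarrow> 1 - scaleC l x) (at l within D)"
      by (intro tendsto_diff tendsto_const tendsto_scaleC_left tendsto_ident_at)
    then show "((\<lambda>m. ainv (1 - scaleC m x)) \<longlongrightarrow> ainv (1 - scaleC l x)) (at l within D)"
      by (rule tendsto_ainv) (use inv l1 in auto)
  qed
  have cD: "compact D" by (simp add: D_def)
  obtain M where M: "\<And>l. l \<in> D \<Longrightarrow> norm (\<phi> l) \<le> M"
    using compact_imp_bounded[OF compact_continuous_image[OF cont cD]] unfolding bounded_iff by auto
  have M0: "M \<ge> 0" using M[of 0] by (simp add: D_def) (metis norm_ge_zero order_trans)
  obtain \<eta> where \<eta>: "\<eta> > 0" "\<And>l m. l \<in> D \<Longrightarrow> m \<in> D \<Longrightarrow> dist m l < \<eta> \<Longrightarrow> dist (\<phi> m) (\<phi> l) < 1/10"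
    using compact_uniformly_continuous[OF cont cD] unfolding uniformly_continuous_on_def
    by (metis divide_pos_pos zero_less_numeral zero_less_one)
  define \<omega> where "\<omega> N k = exp (2 * of_real pi * \<i> * of_nat k / of_nat N)" for N k :: nat
  have \<omega>_norm: "cmod (\<omega> N k) = 1" for N k
    unfolding \<omega>_def by (simp add: norm_exp_eq_Re)
  have \<omega>_pow: "\<omega> N k ^ N = 1" if "N \<ge> 1" for N k
    unfolding \<omega>_def using complex_root_unity[of N k] that by simp
  have inD: "\<omega> N k * complex_of_real t \<in> D" if "0 \<le> t" "t \<le> 1" for N k t
    using that by (simp add: D_def norm_mult \<omega>_norm)
  define A where "A N t = scaleC (complex_of_real (1 / real N)) (\<Sum>k<N. \<phi> (\<omega> N k * complex_of_real t))" for N t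
  define z where "z N t = scaleC (complex_of_real (t ^ N)) (x ^ N)" for N t
  have ident: "A N t * (1 - z N t) = 1 \<and> (1 - z N t) * A N t = 1"
    if N1: "N \<ge> 1" and t: "0 \<le> t" "t \<le> 1" for N t
  proof -
    define G where "G \<mu> = (\<Sum>j<N. scaleC (\<mu> ^ j) (x ^ j))" for \<mu>
    have G: "\<phi> \<mu> * (1 - z N t) = G \<mu> \<and> (1 - z N t) * \<phi> \<mu> = G \<mu>"
      if \<mu>: "\<mu> \<in> D" "\<mu> ^ N = complex_of_real (t ^ N)" for \<mu>
    proof -
      have zz: "(scaleC \<mu> x) ^ N = z N t" unfolding z_def using \<mu>(2) by (simp add: scaleC_power)
      have Geq: "G \<mu> = (\<Sum>j<N. (scaleC \<mu> x) ^ j)" unfolding G_def by (simp add: scaleC_power)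
      have e1: "1 - z N t = (1 - scaleC \<mu> x) * G \<mu>"
        unfolding Geq zz[symmetric] by (rule geom_telescope_left[symmetric])
      have e2: "1 - z N t = G \<mu> * (1 - scaleC \<mu> x)"
        unfolding Geq zz[symmetric] by (rule geom_telescope_right[symmetric])
      have iv: "invertible_elem (1 - scaleC \<mu> x)" using \<mu>(1) inv by (simp add: D_def)
      have "\<phi> \<mu> * (1 - z N t) = (\<phi> \<mu> * (1 - scaleC \<mu> x)) * G \<mu>"
        unfolding e1 by (simp add: mult.assoc)
      also have "\<dots> = G \<mu>" using ainv[OF iv] unfolding \<phi>_def by simp
      finally have r1: "\<phi> \<mu> * (1 - z N t) = G \<mu>" .
      have "(1 - z N t) * \<phi> \<mu> = G \<mu> * ((1 - scaleC \<mu> x) * \<phi> \<mu>)"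
        unfolding e2 by (simp add: mult.assoc)
      also have "\<dots> = G \<mu>" using ainv[OF iv] unfolding \<phi>_def by simp
      finally show ?thesis using r1 by simp
    qed
    have pw: "(\<omega> N k * complex_of_real t) ^ N = complex_of_real (t ^ N)" for k
      using \<omega>_pow[OF N1] by (simp add: power_mult_distrib)
    have sumG: "(\<Sum>k<N. G (\<omega> N k * complex_of_real t)) = scaleC (of_nat N) 1"
    proof -
      have "(\<Sum>k<N. G (\<omega> N k * complex_of_real t))
          = (\<Sum>j<N. scaleC (\<Sum>k<N. (\<omega> N k * complex_of_real t) ^ j) (x ^ j))"
      proof -
        have "(\<Sum>k<N. G (\<omega> N k * complex_of_real t))
            = (\<Sum>k<N. \<Sum>j<N. scaleC ((\<omega> N k * complex_of_real t) ^ j) (x ^ j))"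
          unfolding G_def by simp
        also have "\<dots> = (\<Sum>j<N. \<Sum>k<N. scaleC ((\<omega> N k * complex_of_real t) ^ j) (x ^ j))"
          by (rule sum.swap)
        also have "\<dots> = (\<Sum>j<N. scaleC (\<Sum>k<N. (\<omega> N k * complex_of_real t) ^ j) (x ^ j))"
          by (simp only: scaleC_sum_left)
        finally show ?thesis .
      qed
      also have "\<dots> = (\<Sum>j<N. if j = 0 then scaleC (of_nat N) 1 else 0)"
        by (rule sum.cong) (use N1 in \<open>auto simp: root_sum_scaled \<omega>_def\<close>)
      also have "\<dots> = scaleC (of_nat N) 1" using N1 by (simp add: sum.delta)
      finally show ?thesis .
    qed
    have Nn: "scaleC (complex_of_real (1 / real N)) (scaleC (of_nat N) 1) = 1"
      using N1 by (simp add: scaleC_scaleC)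
    have "A N t * (1 - z N t) = scaleC (complex_of_real (1 / real N)) ((\<Sum>k<N. \<phi> (\<omega> N k * complex_of_real t)) * (1 - z N t))"
      unfolding A_def by (simp add: scaleC_mult_left)
    also have "(\<Sum>k<N. \<phi> (\<omega> N k * complex_of_real t)) * (1 - z N t) = (\<Sum>k<N. G (\<omega> N k * complex_of_real t))"
      by (simp add: sum_distrib_right G[OF inD[OF t] pw])
    finally have l1: "A N t * (1 - z N t) = 1" using sumG Nn by simp
    have "(1 - z N t) * A N t = scaleC (complex_of_real (1 / real N)) ((1 - z N t) * (\<Sum>k<N. \<phi> (\<omega> N k * complex_of_real t)))"
      unfolding A_def by (simp add: scaleC_mult_right)
    also have "(1 - z N t) * (\<Sum>k<N. \<phi> (\<omega> N k * complex_of_real t)) = (\<Sum>k<N. G (\<omega> N k * complex_of_real t))"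
      by (simp add: sum_distrib_left G[OF inD[OF t] pw])
    finally have l2: "(1 - z N t) * A N t = 1" using sumG Nn by simp
    show ?thesis using l1 l2 by simp
  qed
  have Abnd: "norm (A N t) \<le> M" if N1: "N \<ge> 1" and t: "0 \<le> t" "t \<le> 1" for N t
  proof -
    have "norm (\<Sum>k<N. \<phi> (\<omega> N k * complex_of_real t)) \<le> (\<Sum>k<N. norm (\<phi> (\<omega> N k * complex_of_real t)))"
      by (rule norm_sum)
    also have "\<dots> \<le> (\<Sum>k<N. M)" by (intro sum_mono M inD t)
    finally have "norm (\<Sum>k<N. \<phi> (\<omega> N k * complex_of_real t)) \<le> real N * M" by simp
    then show ?thesis unfolding A_def using N1 by (simp add: norm_scaleC norm_divide field_simps)
  qed
  have Adiff: "norm (A N t - A N s) \<le> 1/10"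
    if N1: "N \<ge> 1" and t: "0 \<le> t" "t \<le> 1" and s: "0 \<le> s" "s \<le> 1" and ts: "\<bar>t - s\<bar> < \<eta>" for N t s
  proof -
    have "A N t - A N s = scaleC (complex_of_real (1 / real N))
        (\<Sum>k<N. \<phi> (\<omega> N k * complex_of_real t) - \<phi> (\<omega> N k * complex_of_real s))"
      unfolding A_def by (simp add: scaleC_diff_right sum_subtractf)
    moreover have "norm (\<Sum>k<N. \<phi> (\<omega> N k * complex_of_real t) - \<phi> (\<omega> N k * complex_of_real s)) \<le> real N * (1/10)"
    proof -
      have "norm (\<Sum>k<N. \<phi> (\<omega> N k * complex_of_real t) - \<phi> (\<omega> N k * complex_of_real s))
          \<le> (\<Sum>k<N. norm (\<phi> (\<omega> N k * complex_of_real t) - \<phi> (\<omega> N k * complex_of_real s)))"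
        by (rule norm_sum)
      also have "\<dots> \<le> (\<Sum>k<N. 1/10)"
      proof (rule sum_mono)
        fix k
        have "dist (\<omega> N k * complex_of_real t) (\<omega> N k * complex_of_real s) = \<bar>t - s\<bar>"
          by (simp add: dist_norm norm_mult \<omega>_norm flip: right_diff_distrib of_real_diff)
        then have "dist (\<phi> (\<omega> N k * complex_of_real t)) (\<phi> (\<omega> N k * complex_of_real s)) < 1/10"
          using \<eta>(2)[OF inD[OF s] inD[OF t]] ts by simp
        then show "norm (\<phi> (\<omega> N k * complex_of_real t) - \<phi> (\<omega> N k * complex_of_real s)) \<le> 1/10"
          by (simp add: dist_norm)
      qed
      finally show ?thesis by simp
    qed
    ultimately show ?thesis using N1 by (simp add: norm_scaleC norm_divide field_simps)
  qed
  have fa: "norm (A N t - 1) \<le> M * norm (z N t)" if "N \<ge> 1" "0 \<le> t" "t \<le> 1" for N t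
  proof -
    have "A N t - 1 = A N t * z N t" using ident[OF that] by (simp add: algebra_simps)
    then have "norm (A N t - 1) \<le> norm (A N t) * norm (z N t)" by (simp add: norm_mult_ineq)
    also have "\<dots> \<le> M * norm (z N t)" by (intro mult_right_mono Abnd that) simp
    finally show ?thesis .
  qed
  have fb: "norm (z N t) \<le> (1 + norm (z N t)) * norm (A N t - 1)" if "N \<ge> 1" "0 \<le> t" "t \<le> 1" for N t
  proof -
    have "z N t = (1 - z N t) * (A N t - 1)" using ident[OF that] by (simp add: algebra_simps)
    then have "norm (z N t) \<le> norm (1 - z N t) * norm (A N t - 1)" by (metis norm_mult_ineq)
    also have "\<dots> \<le> (1 + norm (z N t)) * norm (A N t - 1)"
      by (intro mult_right_mono) (auto intro: order_trans[OF norm_triangle_ineq4])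
    finally show ?thesis .
  qed
  define weak where "weak t \<longleftrightarrow> (\<exists>N0. \<forall>N\<ge>N0. norm (z N t) \<le> 1/2)" for t
  define strong where "strong t \<longleftrightarrow> (\<lambda>N. norm (z N t)) \<longlonglongrightarrow> 0" for t
  have nz: "norm (z N t) = \<bar>t\<bar> ^ N * norm (x ^ N)" for N t
    unfolding z_def by (simp add: norm_scaleC power_abs norm_power)
  have step: "weak t" if t: "0 \<le> t" "t \<le> 1" and s: "0 \<le> s" "s \<le> 1" and ts: "\<bar>t - s\<bar> < \<eta>" and st: "strong s" for t s
  proof -
    have ep: "0 < 1 / (10 * (M + 1))" using M0 by simp
    obtain N0 where N0: "\<And>N. N \<ge> N0 \<Longrightarrow> norm (z N s) < 1 / (10 * (M + 1))"
      using order_tendstoD(2)[OF st[unfolded strong_def] ep] unfolding eventually_sequentially by blast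
    have "norm (z N t) \<le> 1/2" if N: "N \<ge> max N0 1" for N
    proof -
      have N1: "N \<ge> 1" using N by simp
      have "norm (A N s - 1) \<le> M * norm (z N s)" by (rule fa[OF N1 s])
      also have "\<dots> \<le> M * (1 / (10 * (M + 1)))"
        using N0[of N] N M0 by (intro mult_left_mono) auto
      also have "\<dots> \<le> 1/10" using M0 by (simp add: field_simps)
      finally have a1: "norm (A N s - 1) \<le> 1/10" .
      have "norm (A N t - 1) \<le> norm (A N t - A N s) + norm (A N s - 1)"
        by (metis diff_add_cancel norm_triangle_ineq add_diff_eq)
      also have "\<dots> \<le> 1/5" using Adiff[OF N1 t s ts] a1 by simp
      finally have a2: "norm (A N t - 1) \<le> 1/5" .
      have "norm (z N t) \<le> (1 + norm (z N t)) * norm (A N t - 1)" by (rule fb[OF N1 t])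
      also have "\<dots> \<le> (1 + norm (z N t)) * (1/5)" by (intro mult_left_mono a2) simp
      finally show ?thesis by simp
    qed
    then show ?thesis unfolding weak_def by blast
  qed
  have weak_strong: "strong s" if w: "weak t" and s: "0 \<le> s" "s < t" for s t
  proof -
    obtain N0 where N0: "\<And>N. N \<ge> N0 \<Longrightarrow> norm (z N t) \<le> 1/2" using w unfolding weak_def by blast
    have t0: "t > 0" using s by simp
    have "(\<lambda>N. (s / t) ^ N) \<longlonglongrightarrow> 0" using s t0 by (intro LIMSEQ_power_zero) simp
    then have lim: "(\<lambda>N. (s / t) ^ N * (1/2)) \<longlonglongrightarrow> 0" by (simp add: tendsto_mult_left_zero)
    show ?thesis unfolding strong_def
    proof (rule tendsto_sandwich[OF _ _ tendsto_const lim])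
      show "\<forall>\<^sub>F N in sequentially. 0 \<le> norm (z N s)" by simp
      show "\<forall>\<^sub>F N in sequentially. norm (z N s) \<le> (s / t) ^ N * (1 / 2)"
        unfolding eventually_sequentially
      proof (intro exI allI impI)
        fix N assume "N \<ge> N0"
        have "norm (z N s) = (s / t) ^ N * norm (z N t)"
          using s t0 unfolding nz by (simp add: power_divide)
        also have "\<dots> \<le> (s / t) ^ N * (1/2)" using N0[OF \<open>N \<ge> N0\<close>] s t0
          by (intro mult_left_mono) auto
        finally show "norm (z N s) \<le> (s / t) ^ N * (1 / 2)" .
      qed
    qed
  qed
  have weak_mono: "weak s" if w: "weak t" and s: "0 \<le> s" "s \<le> t" for s t
  proof -
    obtain N0 where N0: "\<And>N. N \<ge> N0 \<Longrightarrow> norm (z N t) \<le> 1/2" using w unfolding weak_def by blast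
    have "norm (z N s) \<le> norm (z N t)" for N
      unfolding nz using s by (intro mult_right_mono power_mono) auto
    then show ?thesis unfolding weak_def using N0 by (meson order_trans)
  qed
  have strong0: "strong 0"
    unfolding strong_def by (rule LIMSEQ_imp_Suc) (simp add: z_def)
  have advance: "weak t'" if w: "weak t" and t: "0 \<le> t" "t \<le> t'" "t' \<le> 1" "t' < t + \<eta>/2" for t t'
  proof (cases "t \<le> \<eta>/4")
    case True
    show ?thesis by (rule step[OF _ _ _ _ _ strong0]) (use t True \<eta> in auto)
  next
    case False
    have "strong (t - \<eta>/4)" by (rule weak_strong[OF w]) (use False \<eta> in auto)
    then show ?thesis by (rule step[rotated 5]) (use t False \<eta> in auto)
  qed
  have allk: "weak (min 1 (real k * \<eta> / 4))" for k
  proof (induction k)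
    case 0
    show ?case unfolding weak_def by (rule exI[of _ 1]) (auto simp: z_def power_0_left)
  next
    case (Suc k)
    show ?case
      by (rule advance[OF Suc]) (use \<eta> in \<open>auto simp: min_def field_simps\<close>)
  qed
  obtain k :: nat where k: "4 / \<eta> \<le> real k" using real_arch_simple by blast
  then have "1 \<le> real k * \<eta> / 4" using \<eta> by (simp add: field_simps)
  then have "weak 1" using allk[of k] by (simp add: min_def split: if_splits)
  then show ?thesis unfolding weak_def z_def by simp
qed

lemma sa_norm_le_spec:
  assumes sa: "star k = k" and m: "0 \<le> m" and sp: "\<And>l. l \<in> spec k \<Longrightarrow> cmod l \<le> m"
  shows "norm k \<le> m"
proof (rule ccontr)
  assume "\<not> norm k \<le> m"
  then have big: "norm k > m" by simp
  define c where "c = norm k"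
  have c0: "c > 0" using big m unfolding c_def by linarith
  define x where "x = scaleC (complex_of_real (1 / c)) k"
  have xsa: "star x = x" unfolding x_def by (subst star_real_scale) (simp only: sa)
  have nx: "norm x = 1" unfolding x_def using c0 by (simp add: norm_scaleC c_def norm_divide)
  have "\<exists>N0. \<forall>N\<ge>N0. norm (x ^ N) \<le> 1/2"
  proof (rule gelfand_lite)
    fix l :: complex assume l: "cmod l \<le> 1"
    show "invertible_elem (1 - scaleC l x)"
    proof (cases "l = 0")
      case True then show ?thesis by simp
    next
      case False
      have eq: "1 - scaleC l x = scaleC (- l / complex_of_real c) (k - scaleC (complex_of_real c / l) 1)"
        unfolding x_def using False c0 by (simp add: scaleC_diff_right scaleC_scaleC field_simps scaleC_minus_left)
      have "cmod (complex_of_real c / l) = c / cmod l" using c0 by (simp add: norm_divide)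
      also have "\<dots> \<ge> c" using l False c0 by (simp add: field_simps mult_left_le)
      finally have "complex_of_real c / l \<notin> spec k" using sp big unfolding c_def by force
      then have "invertible_elem (k - scaleC (complex_of_real c / l) 1)" using spec_iff by blast
      then show ?thesis unfolding eq using False c0 by (intro invertible_scaleC) auto
    qed
  qed
  then obtain N0 where N0: "\<And>N. N \<ge> N0 \<Longrightarrow> norm (x ^ N) \<le> 1/2" by blast
  have "N0 \<le> 2 ^ N0" by (simp add: less_imp_le)
  then have "norm (x ^ (2 ^ N0)) \<le> 1/2" by (rule N0)
  moreover have "norm (x ^ (2 ^ N0)) = 1" using sa_norm_pow2[OF xsa] nx by simp
  ultimately show False by simp
qed

end

abbreviation rp :: "real poly \<Rightarrow> complex poly" where
  "rp P \<equiv> map_poly complex_of_real P"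

lemma rp_coeff[simp]: "coeff (rp P) i = complex_of_real (coeff P i)"
  by (simp add: coeff_map_poly)

lemma rp_degree[simp]: "degree (rp P) = degree P"
  by (rule degree_map_poly) simp

lemma rp_add: "rp (P + Q) = rp P + rp Q"
  by (intro poly_eqI) simp

lemma rp_diff: "rp (P - Q) = rp P - rp Q"
  by (intro poly_eqI) simp

lemma rp_mult: "rp (P * Q) = rp P * rp Q"
  by (intro poly_eqI) (simp add: coeff_mult)

lemma rp_const: "rp [:c:] = [:complex_of_real c:]"
  by (intro poly_eqI) (simp add: coeff_pCons split: nat.splits)

lemma rp_X: "rp [:0, 1:] = [:0, 1:]"
  by (intro poly_eqI) (simp add: coeff_pCons split: nat.splits)

lemma poly_rp: "poly (rp P) (complex_of_real x) = complex_of_real (poly P x)"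
  by (induction P) (simp_all add: map_poly_pCons)

context unital_cstar_algebra
begin

definition cpev :: "'a \<Rightarrow> complex poly \<Rightarrow> 'a" where
  "cpev h p = (\<Sum>i\<le>degree p. scaleC (coeff p i) (h ^ i))"

lemma cpev_upto:
  assumes "degree p < n"
  shows "cpev h p = (\<Sum>i<n. scaleC (coeff p i) (h ^ i))"
  unfolding cpev_def
proof (rule sum.mono_neutral_left)
  show "finite {..<n}" by simp
  show "{..degree p} \<subseteq> {..<n}" using assms by auto
  show "\<forall>i\<in>{..<n} - {..degree p}. scaleC (coeff p i) (h ^ i) = 0"
    by (auto simp: coeff_eq_0)
qed

lemma cpev_0[simp]: "cpev h 0 = 0"
  by (simp add: cpev_def)

lemma cpev_add: "cpev h (p + q) = cpev h p + cpev h q"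
proof -
  define n where "n = Suc (max (degree p) (degree q))"
  have "degree (p + q) < n" unfolding n_def using degree_add_le_max[of p q] by simp
  then have "cpev h (p + q) = (\<Sum>i<n. scaleC (coeff (p + q) i) (h ^ i))" by (rule cpev_upto)
  also have "\<dots> = (\<Sum>i<n. scaleC (coeff p i) (h ^ i)) + (\<Sum>i<n. scaleC (coeff q i) (h ^ i))"
    by (simp add: scaleC_add_left sum.distrib)
  also have "\<dots> = cpev h p + cpev h q"
    using cpev_upto[of p n h] cpev_upto[of q n h] unfolding n_def by (simp only: less_Suc_eq_le max.cobounded1 max.cobounded2)
  finally show ?thesis .
qed

lemma cpev_smult: "cpev h (smult c p) = scaleC c (cpev h p)"
proof -
  define n where "n = Suc (degree p)"
  have "degree (smult c p) < n" unfolding n_def by (simp add: le_imp_less_Suc)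
  then have "cpev h (smult c p) = (\<Sum>i<n. scaleC (coeff (smult c p) i) (h ^ i))" by (rule cpev_upto)
  also have "\<dots> = scaleC c (\<Sum>i<n. scaleC (coeff p i) (h ^ i))"
    by (simp add: scaleC_sum_right scaleC_scaleC)
  also have "\<dots> = scaleC c (cpev h p)" using cpev_upto[of p n h] unfolding n_def by (simp only: lessI)
  finally show ?thesis .
qed

lemma cpev_minus: "cpev h (- p) = - cpev h p"
  using cpev_smult[of h "-1" p] by (simp add: scaleC_minus_left)

lemma cpev_diff: "cpev h (p - q) = cpev h p - cpev h q"
  using cpev_add[of h p "-q"] by (simp add: cpev_minus)

lemma cpev_pCons: "cpev h (pCons a p) = scaleC a 1 + h * cpev h p"
proof -
  define n where "n = Suc (degree p)"
  have d: "degree (pCons a p) < Suc n" unfolding n_def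
    by (metis degree_pCons_le le_imp_less_Suc)
  have "cpev h (pCons a p) = (\<Sum>i<Suc n. scaleC (coeff (pCons a p) i) (h ^ i))" by (rule cpev_upto[OF d])
  also have "\<dots> = scaleC a 1 + (\<Sum>i<n. scaleC (coeff p i) (h ^ Suc i))"
    by (subst sum.lessThan_Suc_shift) simp
  also have "(\<Sum>i<n. scaleC (coeff p i) (h ^ Suc i)) = h * (\<Sum>i<n. scaleC (coeff p i) (h ^ i))"
    by (simp add: sum_distrib_left scaleC_mult_right)
  also have "(\<Sum>i<n. scaleC (coeff p i) (h ^ i)) = cpev h p" using cpev_upto[of p n h] unfolding n_def by (simp only: lessI)
  finally show ?thesis .
qed

lemma cpev_const[simp]: "cpev h [:c:] = scaleC c 1"
  by (simp add: cpev_pCons)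

lemma cpev_X[simp]: "cpev h [:0, 1:] = h"
  by (simp add: cpev_pCons)

lemma cpev_mult: "cpev h (p * q) = cpev h p * cpev h q"
proof (induction p)
  case 0 then show ?case by simp
next
  case (pCons a p)
  have "cpev h (pCons a p * q) = scaleC a (cpev h q) + h * cpev h (p * q)"
    by (simp add: cpev_add cpev_smult cpev_pCons)
  also have "\<dots> = (scaleC a 1 + h * cpev h p) * cpev h q"
    using pCons.IH by (simp add: distrib_right scaleC_one_mult mult.assoc)
  finally show ?case by (simp add: cpev_pCons)
qed

lemma cpev_commute: "h * cpev h p = cpev h p * h"
  using cpev_mult[of h "[:0,1:]" p] cpev_mult[of h p "[:0,1:]"] by (simp add: mult.commute)

lemma cpev_rp_sa:
  assumes "star h = h"
  shows "star (cpev h (rp P)) = cpev h (rp P)"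
  unfolding cpev_def by (simp add: star_sum star_scaleC sa_power[OF assms])

lemma invertible_scaleC_one: "c \<noteq> 0 \<Longrightarrow> invertible_elem (scaleC c 1)"
  by (intro invertible_scaleC) auto

lemma cpev_invertible:
  assumes "p \<noteq> 0" "\<And>z. poly p z = 0 \<Longrightarrow> z \<notin> spec h"
  shows "invertible_elem (cpev h p)"
  using assms
proof (induction "degree p" arbitrary: p rule: less_induct)
  case less
  show ?case
  proof (cases "degree p = 0")
    case True
    then obtain c where p: "p = [:c:]" by (metis degree_eq_zeroE)
    then have "c \<noteq> 0" using less.prems by simp
    then show ?thesis unfolding p by (simp add: invertible_scaleC_one)
  next
    case False
    have "\<not> (\<exists>a l. a \<noteq> 0 \<and> l = 0 \<and> p = pCons a l)" using False by auto
    then obtain z where z: "poly p z = 0" using fundamental_theorem_of_algebra_alt by blast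
    then obtain r where r: "p = [:- z, 1:] * r" using poly_eq_0_iff_dvd by (metis dvdE)
    have r0: "r \<noteq> 0" using less.prems(1) r by auto
    have "degree ([:- z, 1:] * r) = degree [:- z, 1:] + degree r" by (rule degree_mult_eq) (use r0 in auto)
    then have dr: "degree r < degree p" using r by simp
    have rr: "poly r w = 0 \<Longrightarrow> w \<notin> spec h" for w
      using less.prems(2)[of w] r by simp
    have ir: "invertible_elem (cpev h r)" using less.hyps[OF dr r0 rr] by blast
    have zs: "z \<notin> spec h" using less.prems(2) z by blast
    have iz: "invertible_elem (h - scaleC z 1)" using zs spec_iff by blast
    have cz: "cpev h [:- z, 1:] = h - scaleC z 1" by (simp add: cpev_pCons scaleC_minus_left)
    have "cpev h p = (h - scaleC z 1) * cpev h r"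
      unfolding r cpev_mult cz ..
    then show ?thesis using invertible_mult[OF iz ir] by simp
  qed
qed

definition rspec :: "'a \<Rightarrow> real set" where
  "rspec h = {x. complex_of_real x \<in> spec h}"

lemma rspec_bound: "x \<in> rspec h \<Longrightarrow> \<bar>x\<bar> \<le> norm h"
  unfolding rspec_def using spec_bound by fastforce

lemma sa_spec_rspec:
  assumes "star h = h" "l \<in> spec h"
  shows "l = complex_of_real (Re l) \<and> Re l \<in> rspec h"
proof -
  have "Im l = 0" using sa_spec_real[OF assms] .
  then have "l = complex_of_real (Re l)" by (simp add: complex_eq_iff)
  then show ?thesis using assms(2) unfolding rspec_def by auto
qed

lemma spec_nonempty_sa:
  assumes "star h = h"
  shows "rspec h \<noteq> {}"
proof
  assume e: "rspec h = {}"
  have "spec h = {}" using sa_spec_rspec[OF assms] e by blast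
  then have "norm h \<le> 0" using sa_norm_le_spec[OF assms, of 0] by blast
  then have "h = 0" by simp
  moreover have "0 \<in> spec (0::'a)"
    unfolding spec_iff invertible_elem_def by simp
  ultimately show False using \<open>spec h = {}\<close> by simp
qed

lemma spec_rp:
  assumes sa: "star h = h" and mu: "\<mu> \<in> spec (cpev h (rp P))"
  shows "\<exists>x\<in>rspec h. \<mu> = complex_of_real (poly P x)"
proof (rule ccontr)
  assume nx: "\<not> (\<exists>x\<in>rspec h. \<mu> = complex_of_real (poly P x))"
  define Q where "Q = rp P - [:\<mu>:]"
  have roots: "z \<notin> spec h" if "poly Q z = 0" for z
  proof
    assume zs: "z \<in> spec h"
    then have zr: "z = complex_of_real (Re z)" "Re z \<in> rspec h" using sa_spec_rspec[OF sa] by auto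
    have "poly Q z = complex_of_real (poly P (Re z)) - \<mu>"
      unfolding Q_def by (subst zr(1)) (simp add: poly_rp)
    then have "\<mu> = complex_of_real (poly P (Re z))" using that by simp
    then show False using nx zr(2) by blast
  qed
  have Q0: "Q \<noteq> 0"
  proof
    assume "Q = 0"
    obtain x where "x \<in> rspec h" using spec_nonempty_sa[OF sa] by blast
    then have "complex_of_real x \<in> spec h" unfolding rspec_def by simp
    moreover have "poly Q (complex_of_real x) = 0" using \<open>Q = 0\<close> by simp
    ultimately show False using roots by blast
  qed
  have "invertible_elem (cpev h Q)" by (rule cpev_invertible[OF Q0 roots])
  moreover have "cpev h Q = cpev h (rp P) - scaleC \<mu> 1" unfolding Q_def by (simp add: cpev_diff)
  ultimately show False using mu spec_iff by simp
qed

lemma norm_cpev_rp: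
  assumes sa: "star h = h" and b: "\<And>x. x \<in> rspec h \<Longrightarrow> \<bar>poly P x\<bar> \<le> m"
  shows "norm (cpev h (rp P)) \<le> m"
proof -
  obtain x0 where "x0 \<in> rspec h" using spec_nonempty_sa[OF sa] by blast
  then have m0: "0 \<le> m" using b[of x0] by linarith
  show ?thesis
  proof (rule sa_norm_le_spec[OF cpev_rp_sa[OF sa] m0])
    fix l assume "l \<in> spec (cpev h (rp P))"
    then obtain x where "x \<in> rspec h" "l = complex_of_real (poly P x)" using spec_rp[OF sa] by blast
    then show "cmod l \<le> m" using b by simp
  qed
qed

end

lemma weierstrass_interval:
  fixes f :: "real \<Rightarrow> real"
  assumes cont: "continuous_on {a..b} f" and ab: "a < b" and e: "e > 0"
  shows "\<exists>P. \<forall>x\<in>{a..b}. \<bar>f x - poly P x\<bar> \<le> e"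
proof -
  define g where "g t = f (a + (b - a) * t)" for t
  have img: "(\<lambda>t. a + (b - a) * t) ` {0..1} \<subseteq> {a..b}"
  proof
    fix y assume "y \<in> (\<lambda>t. a + (b - a) * t) ` {0..1}"
    then obtain t where t: "0 \<le> t" "t \<le> 1" "y = a + (b - a) * t" by auto
    have "(b - a) * t \<le> (b - a) * 1" using t ab by (intro mult_left_mono) auto
    moreover have "0 \<le> (b - a) * t" using t ab by simp
    ultimately show "y \<in> {a..b}" using t by simp
  qed
  have cg: "continuous_on {0..1} g" unfolding g_def
    by (rule continuous_on_compose2[OF cont _ img]) (intro continuous_intros)
  obtain N where N: "\<forall>n x. N \<le> n \<and> x \<in> {0..1} \<longrightarrow> \<bar>g x - (\<Sum>k\<le>n. g (k/n) * Bernstein n k x)\<bar> < e"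
    using Bernstein_Weierstrass[OF cg e] by blast
  define T where "T = [:- a / (b - a), 1 / (b - a):]"
  have polyT: "poly T x = (x - a) / (b - a)" for x
  proof -
    have "poly T x = - a / (b - a) + x * (1 / (b - a))" by (simp add: T_def)
    also have "\<dots> = (x - a) / (b - a)" by (simp add: diff_divide_distrib)
    finally show ?thesis .
  qed
  define P where "P = (\<Sum>k\<le>N. smult (g (k/N) * of_nat (N choose k)) (T ^ k * (1 - T) ^ (N - k)))"
  have polyP: "poly P x = (\<Sum>k\<le>N. g (k/N) * Bernstein N k ((x - a) / (b - a)))" for x
    by (simp add: P_def poly_sum Bernstein_def polyT mult.assoc)
  show ?thesis
  proof (intro exI ballI)
    fix x assume x: "x \<in> {a..b}"
    define t where "t = (x - a) / (b - a)"
    have t: "t \<in> {0..1}" using x ab unfolding t_def by (auto simp: field_simps)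
    have "(b - a) * ((x - a) / (b - a)) = x - a" using ab by simp
    then have gt: "g t = f x" unfolding g_def t_def by simp
    have "\<bar>g t - (\<Sum>k\<le>N. g (k/N) * Bernstein N k t)\<bar> < e" using N t by blast
    then show "\<bar>f x - poly P x\<bar> \<le> e" using gt polyP[of x] unfolding t_def by simp
  qed
qed

context unital_cstar_algebra
begin

definition fcR :: "'a \<Rightarrow> real" where "fcR h = norm h + 1"

definition apx :: "'a \<Rightarrow> (real \<Rightarrow> real) \<Rightarrow> nat \<Rightarrow> real poly" where
  "apx h f k = (SOME P. \<forall>x\<in>{- fcR h..fcR h}. \<bar>f x - poly P x\<bar> \<le> inverse (real (Suc k)))"

definition cf :: "'a \<Rightarrow> (real \<Rightarrow> real) \<Rightarrow> 'a" where
  "cf h f = lim (\<lambda>k. cpev h (rp (apx h f k)))"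

lemma apx:
  assumes "continuous_on UNIV f"
  shows "\<forall>x\<in>{- fcR h..fcR h}. \<bar>f x - poly (apx h f k) x\<bar> \<le> inverse (real (Suc k))"
proof -
  have "\<exists>P. \<forall>x\<in>{- fcR h..fcR h}. \<bar>f x - poly P x\<bar> \<le> inverse (real (Suc k))"
  proof (rule weierstrass_interval)
    show "continuous_on {- fcR h..fcR h} f" using assms by (rule continuous_on_subset) simp
    show "- fcR h < fcR h" unfolding fcR_def using norm_ge_zero[of h] by linarith
  qed simp
  then show ?thesis unfolding apx_def by (rule someI_ex)
qed

lemma rspec_fcR: "x \<in> rspec h \<Longrightarrow> x \<in> {- fcR h..fcR h}"
  using rspec_bound[of x h] unfolding fcR_def by auto

lemma apx_rspec:
  assumes "continuous_on UNIV f" "x \<in> rspec h"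
  shows "\<bar>f x - poly (apx h f k) x\<bar> \<le> inverse (real (Suc k))"
  using apx[OF assms(1)] rspec_fcR[OF assms(2)] by blast

lemma cf_conv:
  assumes sa: "star h = h" and cont: "continuous_on UNIV f"
  shows "(\<lambda>k. cpev h (rp (apx h f k))) \<longlonglongrightarrow> cf h f"
proof -
  have Ca: "Cauchy (\<lambda>k. cpev h (rp (apx h f k)))"
  proof (rule CauchyI)
    fix e :: real assume e: "0 < e"
    obtain M :: nat where M: "2 / e < real M" using reals_Archimedean2 by blast
    have "\<forall>m\<ge>M. \<forall>n\<ge>M. norm (cpev h (rp (apx h f m)) - cpev h (rp (apx h f n))) < e"
    proof (intro allI impI)
      fix m n assume mn: "M \<le> m" "M \<le> n"
      have "norm (cpev h (rp (apx h f m)) - cpev h (rp (apx h f n)))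
          = norm (cpev h (rp (apx h f m - apx h f n)))" by (simp add: rp_diff cpev_diff)
      also have "\<dots> \<le> inverse (real (Suc m)) + inverse (real (Suc n))"
      proof (rule norm_cpev_rp[OF sa])
        fix x assume x: "x \<in> rspec h"
        have "\<bar>poly (apx h f m - apx h f n) x\<bar> = \<bar>(f x - poly (apx h f n) x) - (f x - poly (apx h f m) x)\<bar>"
          by simp
        also have "\<dots> \<le> \<bar>f x - poly (apx h f n) x\<bar> + \<bar>f x - poly (apx h f m) x\<bar>" by (rule abs_triangle_ineq4)
        also have "\<dots> \<le> inverse (real (Suc n)) + inverse (real (Suc m))"
          using apx_rspec[OF cont x] by (intro add_mono) auto
        finally show "\<bar>poly (apx h f m - apx h f n) x\<bar> \<le> inverse (real (Suc m)) + inverse (real (Suc n))"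
          by simp
      qed
      also have "\<dots> < e"
      proof -
        have "inverse (real (Suc m)) \<le> inverse (real (Suc M))" using mn by (simp add: field_simps)
        moreover have "inverse (real (Suc n)) \<le> inverse (real (Suc M))" using mn by (simp add: field_simps)
        moreover have "inverse (real (Suc M)) < e / 2" using M e by (simp add: field_simps)
        ultimately show ?thesis by linarith
      qed
      finally show "norm (cpev h (rp (apx h f m)) - cpev h (rp (apx h f n))) < e" .
    qed
    then show "\<exists>M. \<forall>m\<ge>M. \<forall>n\<ge>M. norm (cpev h (rp (apx h f m)) - cpev h (rp (apx h f n))) < e" by blast
  qed
  then have "convergent (\<lambda>k. cpev h (rp (apx h f k)))" by (rule Cauchy_convergent)
  then show ?thesis unfolding cf_def by (simp add: convergent_LIMSEQ_iff)
qed

lemma limit_norm_bound: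
  fixes X :: "nat \<Rightarrow> 'a"
  assumes X: "X \<longlonglongrightarrow> L" and b: "\<And>k. norm (X k - c) \<le> m + inverse (real (Suc k))"
  shows "norm (L - c) \<le> m"
proof -
  have l1: "(\<lambda>k. norm (X k - c)) \<longlonglongrightarrow> norm (L - c)" by (intro tendsto_intros X)
  have l2: "(\<lambda>k. m + inverse (real (Suc k))) \<longlonglongrightarrow> m + 0"
    by (intro tendsto_intros LIMSEQ_inverse_real_of_nat)
  show ?thesis using tendsto_le[OF sequentially_bot l2 l1] b by simp
qed

lemma cf_err:
  assumes sa: "star h = h" and cont: "continuous_on UNIV f"
    and b: "\<And>x. x \<in> rspec h \<Longrightarrow> \<bar>f x - poly P x\<bar> \<le> m"
  shows "norm (cf h f - cpev h (rp P)) \<le> m"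
proof (rule limit_norm_bound[OF cf_conv[OF sa cont]])
  fix k
  have "norm (cpev h (rp (apx h f k)) - cpev h (rp P)) = norm (cpev h (rp (apx h f k - P)))"
    by (simp add: rp_diff cpev_diff)
  also have "\<dots> \<le> m + inverse (real (Suc k))"
  proof (rule norm_cpev_rp[OF sa])
    fix x assume x: "x \<in> rspec h"
    have "\<bar>poly (apx h f k - P) x\<bar> = \<bar>(f x - poly P x) - (f x - poly (apx h f k) x)\<bar>" by simp
    also have "\<dots> \<le> \<bar>f x - poly P x\<bar> + \<bar>f x - poly (apx h f k) x\<bar>" by (rule abs_triangle_ineq4)
    also have "\<dots> \<le> m + inverse (real (Suc k))" using b[OF x] apx_rspec[OF cont x] by (intro add_mono)
    finally show "\<bar>poly (apx h f k - P) x\<bar> \<le> m + inverse (real (Suc k))" .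
  qed
  finally show "norm (cpev h (rp (apx h f k)) - cpev h (rp P)) \<le> m + inverse (real (Suc k))" .
qed

lemma cf_dist:
  assumes sa: "star h = h" and cf: "continuous_on UNIV f" and cg: "continuous_on UNIV g"
    and b: "\<And>x. x \<in> rspec h \<Longrightarrow> \<bar>f x - g x\<bar> \<le> m"
  shows "norm (cf h g - cf h f) \<le> m"
proof (rule limit_norm_bound[OF cf_conv[OF sa cg]])
  fix k
  have "norm (cf h f - cpev h (rp (apx h g k))) \<le> m + inverse (real (Suc k))"
  proof (rule cf_err[OF sa cf])
    fix x assume x: "x \<in> rspec h"
    have "\<bar>f x - poly (apx h g k) x\<bar> \<le> \<bar>f x - g x\<bar> + \<bar>g x - poly (apx h g k) x\<bar>" by linarith
    also have "\<dots> \<le> m + inverse (real (Suc k))" using b[OF x] apx_rspec[OF cg x] by (intro add_mono)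
    finally show "\<bar>f x - poly (apx h g k) x\<bar> \<le> m + inverse (real (Suc k))" .
  qed
  then show "norm (cpev h (rp (apx h g k)) - cf h f) \<le> m + inverse (real (Suc k))"
    by (simp add: norm_minus_commute)
qed

lemma cf_poly:
  assumes sa: "star h = h"
  shows "cf h (poly P) = cpev h (rp P)"
proof -
  have "norm (cf h (poly P) - cpev h (rp P)) \<le> 0"
    by (rule cf_err[OF sa]) (auto intro: continuous_intros)
  then show ?thesis by simp
qed

lemma cf_id:
  assumes sa: "star h = h"
  shows "cf h (\<lambda>x. x) = h"
proof -
  have "(\<lambda>x::real. x) = poly [:0, 1:]" by (rule ext) simp
  then show ?thesis using cf_poly[OF sa, of "[:0,1:]"] by (simp add: rp_X)
qed

lemma cf_const:
  assumes sa: "star h = h"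
  shows "cf h (\<lambda>x. c) = scaleC (complex_of_real c) 1"
proof -
  have "(\<lambda>x::real. c) = poly [:c:]" by (rule ext) simp
  then show ?thesis using cf_poly[OF sa, of "[:c:]"] by (simp add: rp_const)
qed

lemma cf_local:
  assumes sa: "star h = h" and cf: "continuous_on UNIV f" and cg: "continuous_on UNIV g"
    and eq: "\<And>x. x \<in> rspec h \<Longrightarrow> f x = g x"
  shows "cf h f = cf h g"
proof -
  have "norm (cf h g - cf h f) \<le> 0" by (rule cf_dist[OF sa cf cg]) (simp add: eq)
  then show ?thesis by simp
qed

lemma cf_norm:
  assumes sa: "star h = h" and cf: "continuous_on UNIV f"
    and b: "\<And>x. x \<in> rspec h \<Longrightarrow> \<bar>f x\<bar> \<le> m"
  shows "norm (cf h f) \<le> m"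
proof -
  have "norm (cf h f - cf h (\<lambda>x. 0)) \<le> m"
    by (rule cf_dist[OF sa continuous_on_const cf]) (simp add: b)
  then show ?thesis using cf_const[OF sa, of 0] by simp
qed

lemma cf_sa:
  assumes sa: "star h = h" and cont: "continuous_on UNIV f"
  shows "star (cf h f) = cf h f"
proof -
  have l: "(\<lambda>k. cpev h (rp (apx h f k))) \<longlonglongrightarrow> cf h f" by (rule cf_conv[OF sa cont])
  have "(\<lambda>k. star (cpev h (rp (apx h f k)))) \<longlonglongrightarrow> star (cf h f)"
  proof -
    have "(\<lambda>k. cpev h (rp (apx h f k)) - cf h f) \<longlonglongrightarrow> 0" using l by (simp add: Lim_null[symmetric])
    then have "(\<lambda>k. norm (cpev h (rp (apx h f k)) - cf h f)) \<longlonglongrightarrow> 0" by (simp add: tendsto_norm_zero_iff)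
    then have "(\<lambda>k. norm (star (cpev h (rp (apx h f k))) - star (cf h f))) \<longlonglongrightarrow> 0"
      by (simp add: star_diff[symmetric])
    then show ?thesis by (simp add: tendsto_norm_zero_iff Lim_null[symmetric])
  qed
  then have "(\<lambda>k. cpev h (rp (apx h f k))) \<longlonglongrightarrow> star (cf h f)" by (simp add: cpev_rp_sa[OF sa])
  then show ?thesis using l by (rule LIMSEQ_unique)
qed

lemma cf_mult:
  assumes sa: "star h = h" and cf: "continuous_on UNIV f" and cg: "continuous_on UNIV g"
  shows "cf h (\<lambda>x. f x * g x) = cf h f * cf h g"
proof -
  define R where "R = fcR h"
  have cfg: "continuous_on UNIV (\<lambda>x. (f x, g x))" by (intro continuous_intros cf cg)
  have "compact ((\<lambda>x. (f x, g x)) ` {-R..R})"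
    by (rule compact_continuous_image[OF continuous_on_subset[OF cfg]]) auto
  then have "bounded ((\<lambda>x. (f x, g x)) ` {-R..R})" by (rule compact_imp_bounded)
  then obtain B where Bb: "\<forall>y\<in>(\<lambda>x. (f x, g x)) ` {-R..R}. norm y \<le> B"
    unfolding bounded_iff by blast
  have B: "norm (f x, g x) \<le> B" if "x \<in> {-R..R}" for x
    using Bb that by blast
  have Bf: "\<bar>f x\<bar> \<le> B" and Bg: "\<bar>g x\<bar> \<le> B" if "x \<in> {-R..R}" for x
    using B[OF that] norm_fst_le[of "f x" "g x"] norm_snd_le[of "g x" "f x"] by auto
  define P where "P k = apx h f k" for k
  define Q where "Q k = apx h g k" for k
  have lP: "(\<lambda>k. cpev h (rp (P k))) \<longlonglongrightarrow> cf h f" unfolding P_def by (rule cf_conv[OF sa cf])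
  have lQ: "(\<lambda>k. cpev h (rp (Q k))) \<longlonglongrightarrow> cf h g" unfolding Q_def by (rule cf_conv[OF sa cg])
  have "(0::real) \<in> {-R..R}" unfolding R_def fcR_def atLeastAtMost_iff using norm_ge_zero[of h] by linarith
  then have "\<bar>f 0\<bar> \<le> B" by (rule Bf)
  then have B0: "0 \<le> B" by linarith
  have err: "norm (cf h (\<lambda>x. f x * g x) - cpev h (rp (P k)) * cpev h (rp (Q k)))
      \<le> (2 * B + 1) * inverse (real (Suc k))" for k
  proof -
    have "norm (cf h (\<lambda>x. f x * g x) - cpev h (rp (P k * Q k))) \<le> (2 * B + 1) * inverse (real (Suc k))"
    proof (rule cf_err[OF sa])
      show "continuous_on UNIV (\<lambda>x. f x * g x)" by (intro continuous_intros cf cg)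
      fix x assume x: "x \<in> rspec h"
      have xR: "x \<in> {-R..R}" using rspec_fcR[OF x] unfolding R_def .
      define d where "d = inverse (real (Suc k))"
      have d: "0 \<le> d" "d \<le> 1" unfolding d_def by (auto simp: field_simps)
      have ef: "\<bar>f x - poly (P k) x\<bar> \<le> d" unfolding P_def d_def by (rule apx_rspec[OF cf x])
      have eg: "\<bar>g x - poly (Q k) x\<bar> \<le> d" unfolding Q_def d_def by (rule apx_rspec[OF cg x])
      have bQ: "\<bar>poly (Q k) x\<bar> \<le> B + 1" using eg Bg[OF xR] d by linarith
      have "\<bar>f x * g x - poly (P k * Q k) x\<bar>
          = \<bar>f x * (g x - poly (Q k) x) + (f x - poly (P k) x) * poly (Q k) x\<bar>"
        by (simp add: algebra_simps)
      also have "\<dots> \<le> \<bar>f x * (g x - poly (Q k) x)\<bar> + \<bar>(f x - poly (P k) x) * poly (Q k) x\<bar>"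
        by (rule abs_triangle_ineq)
      also have "\<dots> = \<bar>f x\<bar> * \<bar>g x - poly (Q k) x\<bar> + \<bar>f x - poly (P k) x\<bar> * \<bar>poly (Q k) x\<bar>"
        by (simp add: abs_mult)
      also have "\<dots> \<le> B * d + d * (B + 1)"
        using Bf[OF xR] ef eg bQ d B0 by (intro add_mono mult_mono) auto
      also have "\<dots> = (2 * B + 1) * d" by (simp add: algebra_simps)
      finally show "\<bar>f x * g x - poly (P k * Q k) x\<bar> \<le> (2 * B + 1) * inverse (real (Suc k))"
        unfolding d_def .
    qed
    then show ?thesis by (simp add: rp_mult cpev_mult)
  qed
  have "(\<lambda>k. cpev h (rp (P k)) * cpev h (rp (Q k))) \<longlonglongrightarrow> cf h (\<lambda>x. f x * g x)"
  proof -
    have "(\<lambda>k. cpev h (rp (P k)) * cpev h (rp (Q k)) - cf h (\<lambda>x. f x * g x)) \<longlonglongrightarrow> 0"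
    proof (rule Lim_null_comparison)
      show "\<forall>\<^sub>F k in sequentially. norm (cpev h (rp (P k)) * cpev h (rp (Q k)) - cf h (\<lambda>x. f x * g x))
            \<le> (2 * B + 1) * inverse (real (Suc k))"
        using err by (simp add: norm_minus_commute)
      show "(\<lambda>k. (2 * B + 1) * inverse (real (Suc k))) \<longlonglongrightarrow> 0"
        using tendsto_mult_right_zero[OF LIMSEQ_inverse_real_of_nat] by simp
    qed
    then show ?thesis by (simp add: Lim_null[symmetric])
  qed
  moreover have "(\<lambda>k. cpev h (rp (P k)) * cpev h (rp (Q k))) \<longlonglongrightarrow> cf h f * cf h g"
    by (rule tendsto_mult[OF lP lQ])
  ultimately show ?thesis by (rule LIMSEQ_unique)
qed

lemma cf_commute:
  assumes sa: "star h = h" and cf: "continuous_on UNIV f" and cg: "continuous_on UNIV g"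
  shows "cf h f * cf h g = cf h g * cf h f"
  using cf_mult[OF sa cf cg] cf_mult[OF sa cg cf] by (simp add: mult.commute)

lemma cf_commute_h:
  assumes sa: "star h = h" and cf: "continuous_on UNIV f"
  shows "cf h f * h = h * cf h f"
  using cf_commute[OF sa cf continuous_on_id] cf_id[OF sa] by simp

lemma cf_scale:
  assumes sa: "star h = h" and cf: "continuous_on UNIV f"
  shows "cf h (\<lambda>x. c * f x) = scaleC (complex_of_real c) (cf h f)"
  using cf_mult[OF sa continuous_on_const cf, of c] cf_const[OF sa, of c] by (simp add: scaleC_one_mult)

lemma cf_positive:
  assumes sa: "star h = h" and cf: "continuous_on UNIV f" and pos: "\<And>x. f x \<ge> 0"
  shows "positive_elem scaleC star (cf h f)"
proof -
  have cs: "continuous_on UNIV (\<lambda>x. sqrt (f x))" by (intro continuous_intros cf)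
  have "(\<lambda>x. sqrt (f x) * sqrt (f x)) = f" using pos by (simp add: fun_eq_iff)
  then have "cf h f = cf h (\<lambda>x. sqrt (f x)) * cf h (\<lambda>x. sqrt (f x))"
    using cf_mult[OF sa cs cs] by simp
  then show ?thesis using sa_square_positive[OF cf_sa[OF sa cs]] by simp
qed

lemma cf_closed:
  assumes sa: "star h = h" and cont: "continuous_on UNIV f" and f0: "f 0 = 0"
    and Y: "closed Y" and inY: "\<And>P. poly P 0 = 0 \<Longrightarrow> cpev h (rp P) \<in> Y"
  shows "cf h f \<in> Y"
proof -
  define P where "P k = apx h f k - [:poly (apx h f k) 0:]" for k
  have P0: "poly (P k) 0 = 0" for k by (simp add: P_def)
  have err: "norm (cf h f - cpev h (rp (P k))) \<le> 2 * inverse (real (Suc k))" for k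
  proof (rule cf_err[OF sa cont])
    fix x assume x: "x \<in> rspec h"
    have zR: "(0::real) \<in> {- fcR h..fcR h}"
      unfolding fcR_def atLeastAtMost_iff using norm_ge_zero[of h] by linarith
    have e1: "\<bar>f x - poly (apx h f k) x\<bar> \<le> inverse (real (Suc k))" by (rule apx_rspec[OF cont x])
    have e2: "\<bar>f 0 - poly (apx h f k) 0\<bar> \<le> inverse (real (Suc k))" using apx[OF cont] zR by blast
    have "\<bar>f x - poly (P k) x\<bar> = \<bar>(f x - poly (apx h f k) x) - (f 0 - poly (apx h f k) 0)\<bar>"
      by (simp add: P_def f0)
    also have "\<dots> \<le> 2 * inverse (real (Suc k))" using e1 e2 by linarith
    finally show "\<bar>f x - poly (P k) x\<bar> \<le> 2 * inverse (real (Suc k))" .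
  qed
  have lim: "(\<lambda>k. cpev h (rp (P k))) \<longlonglongrightarrow> cf h f"
  proof -
    have "(\<lambda>k. cpev h (rp (P k)) - cf h f) \<longlonglongrightarrow> 0"
    proof (rule Lim_null_comparison)
      show "\<forall>\<^sub>F k in sequentially. norm (cpev h (rp (P k)) - cf h f) \<le> 2 * inverse (real (Suc k))"
        using err by (simp add: norm_minus_commute)
      show "(\<lambda>k. 2 * inverse (real (Suc k))) \<longlonglongrightarrow> 0"
        using tendsto_mult_right_zero[OF LIMSEQ_inverse_real_of_nat] by simp
    qed
    then show ?thesis by (simp add: Lim_null[symmetric])
  qed
  show ?thesis
    by (rule Lim_in_closed_set[OF Y _ trivial_limit_sequentially lim]) (simp add: inY P0)
qed

end

definition bf :: "real \<Rightarrow> real \<Rightarrow> real \<Rightarrow> real" where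
  "bf \<delta> s x = max 0 (1 - \<bar>x - s\<bar> * inverse \<delta>)"

lemma bf_cont: "continuous_on UNIV (bf \<delta> s)"
  unfolding bf_def by (intro continuous_intros)

lemma bf_nonneg: "bf \<delta> s x \<ge> 0"
  unfolding bf_def by simp

lemma bf_center: "\<delta> > 0 \<Longrightarrow> bf \<delta> s s = 1"
  unfolding bf_def by simp

lemma bf_zero: "\<delta> > 0 \<Longrightarrow> \<bar>x - s\<bar> \<ge> \<delta> \<Longrightarrow> bf \<delta> s x = 0"
  unfolding bf_def by (simp add: field_simps)

lemma bf_disjoint:
  assumes "\<delta> > 0" "2 * \<delta> \<le> \<bar>s - s'\<bar>"
  shows "bf \<delta> s x * bf \<delta> s' x = 0"
proof -
  have "\<bar>x - s\<bar> \<ge> \<delta> \<or> \<bar>x - s'\<bar> \<ge> \<delta>" using assms by linarith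
  then show ?thesis using bf_zero[OF assms(1)] by auto
qed

lemma bumps_delta:
  fixes S :: "real set"
  assumes "finite S" "z \<notin> S"
  shows "\<exists>\<delta>>0. (\<forall>s\<in>S. \<delta> \<le> \<bar>s - z\<bar>) \<and> (\<forall>s\<in>S. \<forall>s'\<in>S. s \<noteq> s' \<longrightarrow> 2 * \<delta> \<le> \<bar>s - s'\<bar>)"
proof -
  define T where "T = insert 1 ((\<lambda>s. \<bar>s - z\<bar>) ` S \<union> (\<lambda>(s, s'). \<bar>s - s'\<bar> / 2) ` {(s, s'). s \<in> S \<and> s' \<in> S \<and> s \<noteq> s'})"
  have fT: "finite T" unfolding T_def using assms(1)
    by (intro finite_insert[THEN iffD2] finite_UnI finite_imageI) (auto intro: finite_subset[of _ "S \<times> S"])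
  have pos: "t > 0" if "t \<in> T" for t using that assms(2) unfolding T_def by (auto split: prod.splits)
  define \<delta> where "\<delta> = Min T"
  have "\<delta> \<in> T" unfolding \<delta>_def using fT by (intro Min_in) (auto simp: T_def)
  then have d0: "\<delta> > 0" by (rule pos)
  have le: "\<delta> \<le> t" if "t \<in> T" for t unfolding \<delta>_def using fT that by simp
  show ?thesis
  proof (rule exI[of _ \<delta>], intro conjI ballI impI)
    show "\<delta> > 0" by (rule d0)
  next
    fix s assume "s \<in> S" then show "\<delta> \<le> \<bar>s - z\<bar>" by (intro le) (auto simp: T_def)
  next
    fix s s' assume "s \<in> S" "s' \<in> S" "s \<noteq> s'"
    then have "\<bar>s - s'\<bar> / 2 \<in> T" unfolding T_def by (auto intro!: image_eqI[where x="(s, s')"])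
    then show "2 * \<delta> \<le> \<bar>s - s'\<bar>" using le by fastforce
  qed
qed

context unital_cstar_algebra
begin

lemma cf_add:
  assumes sa: "star h = h" and cf: "continuous_on UNIV f" and cg: "continuous_on UNIV g"
  shows "cf h (\<lambda>x. f x + g x) = cf h f + cf h g"
proof -
  define P where "P k = apx h f k" for k
  define Q where "Q k = apx h g k" for k
  have lP: "(\<lambda>k. cpev h (rp (P k))) \<longlonglongrightarrow> cf h f" unfolding P_def by (rule cf_conv[OF sa cf])
  have lQ: "(\<lambda>k. cpev h (rp (Q k))) \<longlonglongrightarrow> cf h g" unfolding Q_def by (rule cf_conv[OF sa cg])
  have err: "norm (cf h (\<lambda>x. f x + g x) - (cpev h (rp (P k)) + cpev h (rp (Q k))))
      \<le> 2 * inverse (real (Suc k))" for k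
  proof -
    have "norm (cf h (\<lambda>x. f x + g x) - cpev h (rp (P k + Q k))) \<le> 2 * inverse (real (Suc k))"
    proof (rule cf_err[OF sa])
      show "continuous_on UNIV (\<lambda>x. f x + g x)" by (intro continuous_intros cf cg)
      fix x assume x: "x \<in> rspec h"
      have ef: "\<bar>f x - poly (P k) x\<bar> \<le> inverse (real (Suc k))" unfolding P_def by (rule apx_rspec[OF cf x])
      have eg: "\<bar>g x - poly (Q k) x\<bar> \<le> inverse (real (Suc k))" unfolding Q_def by (rule apx_rspec[OF cg x])
      show "\<bar>f x + g x - poly (P k + Q k) x\<bar> \<le> 2 * inverse (real (Suc k))" using ef eg by simp
    qed
    then show ?thesis by (simp add: rp_add cpev_add)
  qed
  have "(\<lambda>k. cpev h (rp (P k)) + cpev h (rp (Q k))) \<longlonglongrightarrow> cf h (\<lambda>x. f x + g x)"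
  proof -
    have "(\<lambda>k. (cpev h (rp (P k)) + cpev h (rp (Q k))) - cf h (\<lambda>x. f x + g x)) \<longlonglongrightarrow> 0"
    proof (rule Lim_null_comparison)
      show "\<forall>\<^sub>F k in sequentially. norm ((cpev h (rp (P k)) + cpev h (rp (Q k))) - cf h (\<lambda>x. f x + g x))
            \<le> 2 * inverse (real (Suc k))"
        using err by (simp add: norm_minus_commute)
      show "(\<lambda>k. 2 * inverse (real (Suc k))) \<longlonglongrightarrow> 0"
        using tendsto_mult_right_zero[OF LIMSEQ_inverse_real_of_nat] by simp
    qed
    then show ?thesis by (simp add: Lim_null[symmetric])
  qed
  moreover have "(\<lambda>k. cpev h (rp (P k)) + cpev h (rp (Q k))) \<longlonglongrightarrow> cf h f + cf h g"
    by (rule tendsto_add[OF lP lQ])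
  ultimately show ?thesis by (rule LIMSEQ_unique)
qed

lemma cf_shift:
  assumes sa: "star h = h"
  shows "cf h (\<lambda>x. x - l) = h - scaleC (complex_of_real l) 1"
proof -
  have "(\<lambda>x::real. x - l) = poly [:- l, 1:]" by (rule ext) simp
  moreover have "rp [:- l, 1:] = [:- complex_of_real l, 1:]"
    by (intro poly_eqI) (simp add: coeff_pCons split: nat.splits)
  moreover have "cpev h [:- complex_of_real l, 1:] = h - scaleC (complex_of_real l) 1"
    by (simp add: cpev_pCons scaleC_minus_left)
  ultimately show ?thesis using cf_poly[OF sa, of "[:- l, 1:]"] by simp
qed

lemma cf_nonzero:
  assumes sa: "star h = h" and cont: "continuous_on UNIV f" and l: "l \<in> rspec h" and fl: "f l \<noteq> 0"
  shows "cf h f \<noteq> 0"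
proof
  assume cf0: "cf h f = 0"
  define c where "c = \<bar>f l\<bar>"
  have c0: "c > 0" using fl unfolding c_def by simp
  obtain \<delta> where d0: "\<delta> > 0" and d: "\<And>x. dist x l < \<delta> \<Longrightarrow> dist (f x) (f l) < c / 2"
    using cont c0 unfolding continuous_on_iff by (metis UNIV_I half_gt_zero)
  have fbig: "f x ^ 2 \<ge> c ^ 2 / 4" if "\<bar>x - l\<bar> < \<delta>" for x
  proof -
    have "\<bar>f x - f l\<bar> < c / 2" using d[of x] that by (simp add: dist_real_def)
    then have "\<bar>f x\<bar> \<ge> c / 2" unfolding c_def by linarith
    then have "(c / 2) ^ 2 \<le> \<bar>f x\<bar> ^ 2" using c0 by (intro power_mono) auto
    then show ?thesis by (simp add: power2_eq_square)
  qed
  define \<phi> where "\<phi> x = min 1 (max 0 (2 - 4 * \<bar>x - l\<bar> / \<delta>))" for x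
  define g1 where "g1 x = \<phi> x * f x / max (c ^ 2 / 4) (f x ^ 2)" for x
  define g2 where "g2 x = (1 - \<phi> x) * (x - l) / max (\<delta> ^ 2 / 16) ((x - l) ^ 2)" for x
  have c\<phi>: "continuous_on UNIV \<phi>" unfolding \<phi>_def using d0 by (intro continuous_intros) auto
  have cg1: "continuous_on UNIV g1" unfolding g1_def
    using c0 by (intro continuous_intros c\<phi> cont) (auto simp: max_def)
  have cg2: "continuous_on UNIV g2" unfolding g2_def
    using d0 by (intro continuous_intros c\<phi>) (auto simp: max_def)
  have e1: "g1 x * f x = \<phi> x" for x
  proof (cases "\<phi> x = 0")
    case True then show ?thesis by (simp add: g1_def)
  next
    case False
    then have "\<bar>x - l\<bar> < \<delta> / 2" unfolding \<phi>_def using d0 by (auto simp: field_simps min_def max_def split: if_splits)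
    then have "f x ^ 2 \<ge> c ^ 2 / 4" using d0 by (intro fbig) simp
    then have m: "max (c ^ 2 / 4) (f x ^ 2) = f x ^ 2" by simp
    have "c ^ 2 / 4 > 0" using c0 by simp
    then have "f x ^ 2 > 0" using \<open>f x ^ 2 \<ge> c ^ 2 / 4\<close> by linarith
    then have "f x \<noteq> 0" by auto
    then show ?thesis unfolding g1_def m by (simp add: power2_eq_square)
  qed
  have e2: "g2 x * (x - l) = 1 - \<phi> x" for x
  proof (cases "\<phi> x = 1")
    case True then show ?thesis by (simp add: g2_def)
  next
    case False
    then have "\<bar>x - l\<bar> > \<delta> / 4" unfolding \<phi>_def using d0 by (auto simp: field_simps min_def max_def split: if_splits)
    then have "(\<delta> / 4) ^ 2 \<le> \<bar>x - l\<bar> ^ 2" using d0 by (intro power_mono) auto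
    then have "(x - l) ^ 2 \<ge> \<delta> ^ 2 / 16" by (simp add: power2_eq_square)
    then have m: "max (\<delta> ^ 2 / 16) ((x - l) ^ 2) = (x - l) ^ 2" by simp
    have "x - l \<noteq> 0" using \<open>\<bar>x - l\<bar> > \<delta> / 4\<close> d0 by auto
    then show ?thesis unfolding g2_def m by (simp add: power2_eq_square)
  qed
  have cs: "continuous_on UNIV (\<lambda>x::real. x - l)" by (intro continuous_intros)
  have "(\<lambda>x. g1 x * f x + g2 x * (x - l)) = (\<lambda>x. 1)" using e1 e2 by (simp add: fun_eq_iff)
  then have "cf h (\<lambda>x. 1) = cf h (\<lambda>x. g1 x * f x + g2 x * (x - l))" by simp
  also have "\<dots> = cf h g1 * cf h f + cf h g2 * cf h (\<lambda>x. x - l)"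
    using cf_add[OF sa] cf_mult[OF sa] cg1 cg2 cont cs
    by (simp add: continuous_intros cf_add[OF sa, of "\<lambda>x. g1 x * f x" "\<lambda>x. g2 x * (x - l)"]
        continuous_on_mult)
  finally have one: "cf h g2 * (h - scaleC (complex_of_real l) 1) = 1"
    using cf0 cf_const[OF sa, of 1] cf_shift[OF sa, of l] by simp
  have "cf h g2 * cf h (\<lambda>x. x - l) = cf h (\<lambda>x. x - l) * cf h g2" by (rule cf_commute[OF sa cg2 cs])
  then have two: "(h - scaleC (complex_of_real l) 1) * cf h g2 = 1" using one cf_shift[OF sa, of l] by simp
  have "invertible_elem (h - scaleC (complex_of_real l) 1)" using one two by (intro invertibleI)
  then show False using l unfolding rspec_def spec_iff by simp
qed

lemma pos_scale:
  assumes p: "positive_elem scaleC star c" and t: "t > 0"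
  shows "positive_elem scaleC star (scaleC (complex_of_real t) c)"
  unfolding positive_elem_def
proof (rule conjI)
  show "star (scaleC (complex_of_real t) c) = scaleC (complex_of_real t) c"
    using p by (simp add: star_real_scale positive_elem_def)
  show "\<forall>l\<in>spec (scaleC (complex_of_real t) c). Im l = 0 \<and> 0 \<le> Re l"
  proof
    fix l assume "l \<in> spec (scaleC (complex_of_real t) c)"
    then have "l / complex_of_real t \<in> spec c" using spec_scale[of "complex_of_real t"] t by simp
    then have "Im (l / complex_of_real t) = 0 \<and> 0 \<le> Re (l / complex_of_real t)"
      using p unfolding positive_elem_def by blast
    then show "Im l = 0 \<and> 0 \<le> Re l" using t by (simp add: Im_divide_of_real Re_divide_of_real field_simps)
  qed
qed

lemma sa_nonzero_square:
  assumes "star c = c" "c \<noteq> 0"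
  shows "c * c \<noteq> 0"
  using sa_norm_square[OF assms(1)] assms(2) by auto

lemma conclude:
  fixes C :: "'a set" and n :: nat and b :: 'a
  assumes fin: "finite C" and card: "card C \<ge> n"
    and props: "\<And>c. c \<in> C \<Longrightarrow> positive_elem scaleC star c \<and> c \<noteq> 0 \<and> b * c = c * b \<and> norm (b * c) \<ge> (1 - \<epsilon>) * norm c"
    and orth: "\<And>c d. c \<in> C \<Longrightarrow> d \<in> C \<Longrightarrow> c \<noteq> d \<Longrightarrow> c * d = 0"
  shows "\<exists>bs :: nat \<Rightarrow> 'a.
           (\<forall>j\<in>{1..n}. positive_elem scaleC star (bs j) \<and> norm (bs j) = 1 \<and>
                        b * bs j = bs j * b \<and> norm (b * bs j) \<ge> 1 - \<epsilon>) \<and>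
           (\<forall>i\<in>{1..n}. \<forall>j\<in>{1..n}. i \<noteq> j \<longrightarrow> bs i * bs j = 0)"
proof -
  obtain e where e: "bij_betw e {0..<card C} C" using ex_bij_betw_nat_finite[OF fin] by blast
  define bs where "bs j = scaleC (complex_of_real (1 / norm (e (j - 1)))) (e (j - 1))" for j
  have inC: "e (j - 1) \<in> C" if "j \<in> {1..n}" for j
    using e that card unfolding bij_betw_def by auto
  show ?thesis
  proof (intro exI conjI ballI impI)
    fix j assume j: "j \<in> {1..n}"
    define c where "c = e (j - 1)"
    have pc: "positive_elem scaleC star c \<and> c \<noteq> 0 \<and> b * c = c * b \<and> norm (b * c) \<ge> (1 - \<epsilon>) * norm c"
      using props inC[OF j] unfolding c_def by blast
    have nc: "norm c > 0" using pc by simp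
    have bsj: "bs j = scaleC (complex_of_real (1 / norm c)) c" unfolding bs_def c_def ..
    show "positive_elem scaleC star (bs j)" unfolding bsj using pc nc by (intro pos_scale) auto
    show "norm (bs j) = 1" unfolding bsj using nc by (simp add: norm_scaleC norm_divide)
    show "b * bs j = bs j * b" unfolding bsj using pc by (simp add: scaleC_mult_left[symmetric] scaleC_mult_right[symmetric])
    have "norm (b * bs j) = norm (b * c) / norm c" unfolding bsj
      using nc by (simp add: scaleC_mult_right[symmetric] norm_scaleC norm_divide field_simps)
    also have "\<dots> \<ge> 1 - \<epsilon>"
    proof -
      have h1: "(1 - \<epsilon>) * norm c \<le> norm (b * c)" using pc by blast
      then show ?thesis using nc by (simp add: le_divide_eq)
    qed
    finally show "norm (b * bs j) \<ge> 1 - \<epsilon>" .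
  next
    fix i j assume i: "i \<in> {1..n}" and j: "j \<in> {1..n}" and ij: "i \<noteq> j"
    have "i - 1 \<noteq> j - 1" using i j ij by auto
    moreover have "i - 1 \<in> {0..<card C}" "j - 1 \<in> {0..<card C}" using i j card by auto
    ultimately have "e (i - 1) \<noteq> e (j - 1)" using e unfolding bij_betw_def inj_on_def by blast
    then have "e (i - 1) * e (j - 1) = 0" using orth inC[OF i] inC[OF j] by blast
    then show "bs i * bs j = 0" unfolding bs_def by (simp add: scaleC_mult_both)
  qed
qed

end

context unital_cstar_algebra
begin

subsection \<open>Complex spans\<close>

lemma cspan_zero: "0 \<in> cspan_fin scaleC T"
  unfolding cspan_fin_def by (rule CollectI, rule exI[of _ "\<lambda>_. 0"]) simp

lemma cspan_add:
  assumes "a \<in> cspan_fin scaleC T" "b \<in> cspan_fin scaleC T"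
  shows "a + b \<in> cspan_fin scaleC T"
proof -
  obtain c1 where a: "a = (\<Sum>s\<in>T. scaleC (c1 s) s)" using assms(1) unfolding cspan_fin_def by blast
  obtain c2 where b: "b = (\<Sum>s\<in>T. scaleC (c2 s) s)" using assms(2) unfolding cspan_fin_def by blast
  have eq: "a + b = (\<Sum>s\<in>T. scaleC (c1 s + c2 s) s)" unfolding a b by (simp add: scaleC_add_left sum.distrib)
  show ?thesis unfolding cspan_fin_def
    by (rule CollectI, rule exI[of _ "\<lambda>s. c1 s + c2 s"]) (simp add: eq)
qed

lemma cspan_scale:
  assumes "a \<in> cspan_fin scaleC T"
  shows "scaleC d a \<in> cspan_fin scaleC T"
proof -
  obtain c1 where a: "a = (\<Sum>s\<in>T. scaleC (c1 s) s)" using assms(1) unfolding cspan_fin_def by blast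
  have eq: "scaleC d a = (\<Sum>s\<in>T. scaleC (d * c1 s) s)" unfolding a by (simp add: scaleC_sum_right scaleC_scaleC)
  show ?thesis unfolding cspan_fin_def
    by (rule CollectI, rule exI[of _ "\<lambda>s. d * c1 s"]) (simp add: eq)
qed

lemma cspan_elem:
  assumes "finite T" "t \<in> T"
  shows "t \<in> cspan_fin scaleC T"
proof -
  have "(\<Sum>s\<in>T. scaleC (if s = t then 1 else 0) s) = (\<Sum>s\<in>T. if s = t then s else 0)"
    by (rule sum.cong) auto
  also have "\<dots> = t" using assms by (simp add: sum.delta)
  finally have eq: "(\<Sum>s\<in>T. scaleC (if s = t then 1 else 0) s) = t" .
  show ?thesis unfolding cspan_fin_def
    by (rule CollectI, rule exI[of _ "\<lambda>s. if s = t then 1 else 0"]) (simp add: eq)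
qed

lemma cspan_sum:
  assumes "finite I" "\<And>i. i \<in> I \<Longrightarrow> f i \<in> cspan_fin scaleC T"
  shows "sum f I \<in> cspan_fin scaleC T"
  using assms by (induction I rule: finite_induct) (auto intro: cspan_zero cspan_add)

subsection \<open>Corners\<close>

lemma closed_corner_set:
  fixes q :: 'a
  shows "closed {y. q * y = y \<and> y * q = y}"
proof -
  have "closed {y. q * y = y}" by (rule closed_Collect_eq[where f="\<lambda>y::'a. q * y" and g="\<lambda>y::'a. y"]) (intro continuous_intros)+
  moreover have "closed {y. y * q = y}" by (rule closed_Collect_eq[where f="\<lambda>y::'a. y * q" and g="\<lambda>y::'a. y"]) (intro continuous_intros)+
  ultimately show ?thesis by (simp add: Collect_conj_eq closed_Int)
qed

lemma cpev_corner:
  assumes qh: "q * h = h" "h * q = h" and c0: "coeff P 0 = 0"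
  shows "q * cpev h P = cpev h P \<and> cpev h P * q = cpev h P"
proof -
  have t: "q * scaleC (coeff P i) (h ^ i) = scaleC (coeff P i) (h ^ i) \<and>
           scaleC (coeff P i) (h ^ i) * q = scaleC (coeff P i) (h ^ i)" for i
  proof (cases i)
    case 0 then show ?thesis using c0 by simp
  next
    case (Suc j)
    have "q * h ^ i = h ^ i" unfolding Suc by (simp add: mult.assoc[symmetric] qh)
    moreover have "h ^ i * q = h ^ i" unfolding Suc by (simp only: power_Suc2 mult.assoc qh)
    ultimately show ?thesis by (simp add: scaleC_mult_right[symmetric] scaleC_mult_left[symmetric])
  qed
  show ?thesis unfolding cpev_def using t by (simp add: sum_distrib_left sum_distrib_right)
qed

lemma cf_corner:
  assumes sa: "star h = h" and qh: "q * h = h" "h * q = h"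
    and cont: "continuous_on UNIV f" and f0: "f 0 = 0"
  shows "q * cf h f = cf h f \<and> cf h f * q = cf h f"
proof -
  have "cf h f \<in> {y. q * y = y \<and> y * q = y}"
  proof (rule cf_closed[OF sa cont f0 closed_corner_set])
    fix P :: "real poly" assume "poly P 0 = 0"
    then have "coeff (rp P) 0 = 0" by (simp add: poly_0_coeff_0)
    then show "cpev h (rp P) \<in> {y. q * y = y \<and> y * q = y}" using cpev_corner[OF qh] by blast
  qed
  then show ?thesis by simp
qed

lemma bump_family:
  assumes sa: "star h = h" and S: "finite S" "S \<subseteq> rspec h" and z: "z \<notin> S"
  obtains \<delta> where "\<delta> > 0" "\<And>s. s \<in> S \<Longrightarrow> bf \<delta> s z = 0"
    "\<And>s s'. s \<in> S \<Longrightarrow> s' \<in> S \<Longrightarrow> s \<noteq> s' \<Longrightarrow> bf \<delta> s s' = 0"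
    "\<And>s. s \<in> S \<Longrightarrow> positive_elem scaleC star (cf h (bf \<delta> s)) \<and> cf h (bf \<delta> s) \<noteq> 0
        \<and> star (cf h (bf \<delta> s)) = cf h (bf \<delta> s)"
    "\<And>s s'. s \<in> S \<Longrightarrow> s' \<in> S \<Longrightarrow> s \<noteq> s' \<Longrightarrow> cf h (bf \<delta> s) * cf h (bf \<delta> s') = 0"
    "inj_on (\<lambda>s. cf h (bf \<delta> s)) S"
proof -
  obtain \<delta> where d0: "\<delta> > 0" and dz: "\<forall>s\<in>S. \<delta> \<le> \<bar>s - z\<bar>"
    and dd: "\<forall>s\<in>S. \<forall>s'\<in>S. s \<noteq> s' \<longrightarrow> 2 * \<delta> \<le> \<bar>s - s'\<bar>"
    using bumps_delta[OF S(1) z] by blast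
  have p1: "bf \<delta> s z = 0" if "s \<in> S" for s
    using dz that d0 by (intro bf_zero) (auto simp: abs_minus_commute)
  have p2: "bf \<delta> s s' = 0" if "s \<in> S" "s' \<in> S" "s \<noteq> s'" for s s'
  proof -
    have a: "2 * \<delta> \<le> \<bar>s - s'\<bar>" using dd that by blast
    have "\<bar>s' - s\<bar> = \<bar>s - s'\<bar>" by (rule abs_minus_commute)
    then have "\<delta> \<le> \<bar>s' - s\<bar>" using a d0 by linarith
    then show ?thesis by (rule bf_zero[OF d0])
  qed
  have p3: "positive_elem scaleC star (cf h (bf \<delta> s)) \<and> cf h (bf \<delta> s) \<noteq> 0
        \<and> star (cf h (bf \<delta> s)) = cf h (bf \<delta> s)" if "s \<in> S" for s
  proof (intro conjI)
    show "positive_elem scaleC star (cf h (bf \<delta> s))" by (rule cf_positive[OF sa bf_cont bf_nonneg])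
    show "cf h (bf \<delta> s) \<noteq> 0" using that S(2) d0 by (intro cf_nonzero[OF sa bf_cont]) (auto simp: bf_center)
    show "star (cf h (bf \<delta> s)) = cf h (bf \<delta> s)" by (rule cf_sa[OF sa bf_cont])
  qed
  have p4: "cf h (bf \<delta> s) * cf h (bf \<delta> s') = 0" if "s \<in> S" "s' \<in> S" "s \<noteq> s'" for s s'
  proof -
    have "cf h (bf \<delta> s) * cf h (bf \<delta> s') = cf h (\<lambda>x. bf \<delta> s x * bf \<delta> s' x)"
      by (rule cf_mult[OF sa bf_cont bf_cont, symmetric])
    also have "(\<lambda>x. bf \<delta> s x * bf \<delta> s' x) = (\<lambda>x. 0)"
      using bf_disjoint[OF d0] dd that by (simp add: fun_eq_iff)
    also have "cf h (\<lambda>x. 0) = 0" using cf_const[OF sa, of 0] by simp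
    finally show ?thesis .
  qed
  have p5: "inj_on (\<lambda>s. cf h (bf \<delta> s)) S"
  proof (rule inj_onI, rule ccontr)
    fix s s' assume s: "s \<in> S" "s' \<in> S" and eq: "cf h (bf \<delta> s) = cf h (bf \<delta> s')" and ne: "s \<noteq> s'"
    have "cf h (bf \<delta> s) * cf h (bf \<delta> s) = 0" using p4[OF s ne] eq by simp
    then show False using sa_nonzero_square p3[OF s(1)] by blast
  qed
  show ?thesis using that[OF d0 p1 p2 p3 p4 p5] .
qed

definition good_fam :: "'a \<Rightarrow> 'a set \<Rightarrow> bool" where
  "good_fam p C \<longleftrightarrow> finite C \<and> (\<forall>c\<in>C. positive_elem scaleC star c \<and> c \<noteq> 0 \<and> p * c = c \<and> c * p = c)
     \<and> (\<forall>c\<in>C. \<forall>d\<in>C. c \<noteq> d \<longrightarrow> c * d = 0)"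

definition proj_fam :: "'a \<Rightarrow> 'a set \<Rightarrow> bool" where
  "proj_fam p Q \<longleftrightarrow> finite Q \<and> (\<forall>q\<in>Q. projection_elem star q \<and> q \<noteq> 0 \<and> p * q = q \<and> q * p = q)
     \<and> (\<forall>q\<in>Q. \<forall>q'\<in>Q. q \<noteq> q' \<longrightarrow> q * q' = 0)"

lemma infinite_spec_family:
  assumes sa: "star h = h" and ph: "p * h = h" "h * p = h" and inf: "\<not> finite (rspec h)"
  shows "\<exists>C. good_fam p C \<and> card C = n"
proof -
  have "\<not> finite (rspec h - {0})" using inf by simp
  then obtain S where S: "finite S" "card S = n" "S \<subseteq> rspec h - {0}"
    using infinite_arbitrarily_large[OF \<open>\<not> finite (rspec h - {0})\<close>, of n] by blast
  have z: "0 \<notin> S" using S(3) by blast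
  have Ssub: "S \<subseteq> rspec h" using S(3) by blast
  show ?thesis
  proof (rule bump_family[OF sa S(1) Ssub z])
    fix \<delta> :: real
    assume d0: "\<delta> > 0" and b0: "\<And>s. s \<in> S \<Longrightarrow> bf \<delta> s 0 = 0"
      and p2: "\<And>s s'. s \<in> S \<Longrightarrow> s' \<in> S \<Longrightarrow> s \<noteq> s' \<Longrightarrow> bf \<delta> s s' = 0"
      and p3: "\<And>s. s \<in> S \<Longrightarrow> positive_elem scaleC star (cf h (bf \<delta> s)) \<and> cf h (bf \<delta> s) \<noteq> 0
        \<and> star (cf h (bf \<delta> s)) = cf h (bf \<delta> s)"
      and p4: "\<And>s s'. s \<in> S \<Longrightarrow> s' \<in> S \<Longrightarrow> s \<noteq> s' \<Longrightarrow> cf h (bf \<delta> s) * cf h (bf \<delta> s') = 0"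
      and p5: "inj_on (\<lambda>s. cf h (bf \<delta> s)) S"
    define C where "C = (\<lambda>s. cf h (bf \<delta> s)) ` S"
    have "good_fam p C"
      unfolding good_fam_def
    proof (intro conjI ballI impI)
      show "finite C" unfolding C_def using S by simp
    next
      fix c assume "c \<in> C"
      then obtain s where s: "s \<in> S" "c = cf h (bf \<delta> s)" unfolding C_def by blast
      show "positive_elem scaleC star c" unfolding s(2) using p3[OF s(1)] by blast
      show "c \<noteq> 0" unfolding s(2) using p3[OF s(1)] by blast
      show "p * c = c" "c * p = c" unfolding s(2) using cf_corner[OF sa ph bf_cont b0[OF s(1)]] by auto
    next
      fix c d assume "c \<in> C" "d \<in> C" "c \<noteq> d"
      then obtain s s' where "s \<in> S" "s' \<in> S" "c = cf h (bf \<delta> s)" "d = cf h (bf \<delta> s')" "s \<noteq> s'"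
        unfolding C_def by blast
      then show "c * d = 0" using p4 by blast
    qed
    moreover have "card C = n" unfolding C_def using card_image[OF p5] S by simp
    ultimately show ?thesis by blast
  qed
qed

lemma proj_positive:
  assumes "projection_elem star q"
  shows "positive_elem scaleC star q"
  using sa_square_positive[of q] assms unfolding projection_elem_def by simp

lemma proj_fam_good: "proj_fam p Q \<Longrightarrow> good_fam p Q"
  unfolding proj_fam_def good_fam_def using proj_positive by blast

end

context unital_cstar_algebra
begin

lemma sum_mult_member:
  fixes Q :: "'a set"
  assumes fin: "finite Q" and q0: "q0 \<in> Q" and orth: "\<And>q. q \<in> Q \<Longrightarrow> q \<noteq> q0 \<Longrightarrow> q * q0 = 0 \<and> q0 * q = 0"
    and idem: "q0 * q0 = q0"
  shows "(\<Sum>q\<in>Q. q) * q0 = q0" "q0 * (\<Sum>q\<in>Q. q) = q0"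
proof -
  have "(\<Sum>q\<in>Q. q) * q0 = (\<Sum>q\<in>Q. q * q0)" by (rule sum_distrib_right)
  also have "\<dots> = q0 * q0 + (\<Sum>q\<in>Q - {q0}. q * q0)" by (rule sum.remove[OF fin q0])
  also have "(\<Sum>q\<in>Q - {q0}. q * q0) = 0" by (rule sum.neutral) (use orth in blast)
  finally show "(\<Sum>q\<in>Q. q) * q0 = q0" using idem by simp
  have "q0 * (\<Sum>q\<in>Q. q) = (\<Sum>q\<in>Q. q0 * q)" by (rule sum_distrib_left)
  also have "\<dots> = q0 * q0 + (\<Sum>q\<in>Q - {q0}. q0 * q)" by (rule sum.remove[OF fin q0])
  also have "(\<Sum>q\<in>Q - {q0}. q0 * q) = 0" by (rule sum.neutral) (use orth in blast)
  finally show "q0 * (\<Sum>q\<in>Q. q) = q0" using idem by simp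
qed

lemma max_proj_sum:
  assumes pp: "projection_elem star p" and fam: "proj_fam p Q"
    and max: "\<And>Q'. proj_fam p Q' \<Longrightarrow> card Q' \<le> card Q"
  shows "(\<Sum>q\<in>Q. q) = p"
proof (rule ccontr)
  assume ne: "(\<Sum>q\<in>Q. q) \<noteq> p"
  define s where "s = (\<Sum>q\<in>Q. q)"
  have fin: "finite Q" using fam unfolding proj_fam_def by blast
  have mem: "projection_elem star q \<and> q \<noteq> 0 \<and> p * q = q \<and> q * p = q" if "q \<in> Q" for q
    using fam that unfolding proj_fam_def by blast
  have orth: "q * q' = 0" if "q \<in> Q" "q' \<in> Q" "q \<noteq> q'" for q q'
    using fam that unfolding proj_fam_def by blast
  have pp2: "star p = p" "p * p = p" using pp unfolding projection_elem_def by auto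
  have sq: "s * q0 = q0" "q0 * s = q0" if q0: "q0 \<in> Q" for q0
  proof -
    have idem: "q0 * q0 = q0" using mem[OF q0] unfolding projection_elem_def by blast
    have o: "q * q0 = 0 \<and> q0 * q = 0" if "q \<in> Q" "q \<noteq> q0" for q
      using orth[OF that(1) q0] orth[OF q0 that(1)] that(2) by auto
    show "s * q0 = q0" "q0 * s = q0" unfolding s_def using sum_mult_member[OF fin q0 o idem] by auto
  qed
  have ss: "s * s = s"
  proof -
    have "s * s = (\<Sum>q\<in>Q. s * q)" unfolding s_def by (rule sum_distrib_left)
    also have "\<dots> = s" unfolding s_def by (rule sum.cong) (auto simp: sq(1)[unfolded s_def])
    finally show ?thesis .
  qed
  have ps: "p * s = s" unfolding s_def by (simp add: sum_distrib_left mem)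
  have sp: "s * p = s" unfolding s_def by (simp add: sum_distrib_right mem)
  have sst: "star s = s" unfolding s_def using mem by (simp add: star_sum projection_elem_def)
  define e where "e = p - s"
  have e0: "e \<noteq> 0" using ne unfolding e_def s_def by simp
  have est: "star e = e" unfolding e_def by (simp add: star_diff sst pp2)
  have ee: "e * e = e"
  proof -
    have "e * e = p * p - p * s - s * p + s * s" unfolding e_def by (simp add: algebra_simps)
    then show ?thesis unfolding e_def using pp2 ps sp ss by simp
  qed
  have eq: "e * q = 0" "q * e = 0" if "q \<in> Q" for q
    unfolding e_def using sq[OF that] mem[OF that] by (simp_all add: algebra_simps)
  have pe: "p * e = e" "e * p = e" unfolding e_def using pp2 ps sp by (simp_all add: algebra_simps)
  have eQ: "e \<notin> Q"
  proof
    assume "e \<in> Q"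
    then have "e * e = 0" using eq by blast
    then show False using ee e0 by simp
  qed
  have "proj_fam p (insert e Q)"
    unfolding proj_fam_def
  proof (intro conjI)
    show "finite (insert e Q)" using fin by simp
  next
    show "\<forall>q\<in>insert e Q. projection_elem star q \<and> q \<noteq> 0 \<and> p * q = q \<and> q * p = q"
    proof
      fix q assume "q \<in> insert e Q"
      then show "projection_elem star q \<and> q \<noteq> 0 \<and> p * q = q \<and> q * p = q"
        using mem e0 pe est ee unfolding projection_elem_def by auto
    qed
  next
    show "\<forall>q\<in>insert e Q. \<forall>q'\<in>insert e Q. q \<noteq> q' \<longrightarrow> q * q' = 0"
    proof (intro ballI impI)
    fix q q' assume q: "q \<in> insert e Q" and q': "q' \<in> insert e Q" and qq: "q \<noteq> q'"
    show "q * q' = 0"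
    proof (cases "q = e")
      case True
      then have "q' \<in> Q" using q' qq by simp
      then show ?thesis using True eq by simp
    next
      case False
      then have qQ: "q \<in> Q" using q by simp
      show ?thesis
      proof (cases "q' = e")
        case True then show ?thesis using qQ eq by simp
      next
        case False
        then have "q' \<in> Q" using q' by simp
        then show ?thesis using orth qQ qq by blast
      qed
    qed
    qed
  qed
  then have "card (insert e Q) \<le> card Q" by (rule max)
  moreover have "card (insert e Q) = Suc (card Q)" using fin eQ by simp
  ultimately show False by simp
qed

lemma max_proj_minimal:
  assumes fam: "proj_fam p Q" and max: "\<And>Q'. proj_fam p Q' \<Longrightarrow> card Q' \<le> card Q"
    and qQ: "q \<in> Q" and ep: "projection_elem star e" and qe: "q * e = e" "e * q = e"
  shows "e = 0 \<or> e = q"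
proof (rule ccontr)
  assume "\<not> (e = 0 \<or> e = q)"
  then have e0: "e \<noteq> 0" and eq: "e \<noteq> q" by auto
  have fin: "finite Q" using fam unfolding proj_fam_def by blast
  have mem: "projection_elem star r \<and> r \<noteq> 0 \<and> p * r = r \<and> r * p = r" if "r \<in> Q" for r
    using fam that unfolding proj_fam_def by blast
  have orth: "r * r' = 0" if "r \<in> Q" "r' \<in> Q" "r \<noteq> r'" for r r'
    using fam that unfolding proj_fam_def by blast
  have qq: "star q = q" "q * q = q" using mem[OF qQ] unfolding projection_elem_def by auto
  have pq: "p * q = q" "q * p = q" using mem[OF qQ] by auto
  have ee: "star e = e" "e * e = e" using ep unfolding projection_elem_def by auto
  define f where "f = q - e"
  have fst: "star f = f" unfolding f_def by (simp add: star_diff qq ee)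
  have ff: "f * f = f"
  proof -
    have "f * f = q * q - q * e - e * q + e * e" unfolding f_def by (simp add: algebra_simps)
    then show ?thesis unfolding f_def using qq ee qe by simp
  qed
  have f0: "f \<noteq> 0" using eq unfolding f_def by simp
  have ef: "e * f = 0" "f * e = 0" unfolding f_def using qe ee by (simp_all add: algebra_simps)
  have fq: "q * f = f" "f * q = f" unfolding f_def using qe qq by (simp_all add: algebra_simps)
  have pe: "p * e = e" "e * p = e"
  proof -
    have "p * e = (p * q) * e" using qe by (simp add: mult.assoc)
    then show "p * e = e" using pq qe by simp
    have "e * p = e * (q * p)" using qe by (simp add: mult.assoc[symmetric])
    then show "e * p = e" using pq qe by simp
  qed
  have pf: "p * f = f" "f * p = f" unfolding f_def using pe pq by (simp_all add: algebra_simps)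
  have oth: "e * r = 0 \<and> r * e = 0 \<and> f * r = 0 \<and> r * f = 0" if r: "r \<in> Q - {q}" for r
  proof -
    have rq: "q * r = 0" "r * q = 0" using orth[OF qQ, of r] orth[of r q] r qQ by auto
    have "e * r = e * (q * r)" using qe by (simp add: mult.assoc[symmetric])
    moreover have "r * e = (r * q) * e" using qe by (simp add: mult.assoc)
    moreover have "f * r = f * (q * r)" using fq by (simp add: mult.assoc[symmetric])
    moreover have "r * f = (r * q) * f" using fq by (simp add: mult.assoc)
    ultimately show ?thesis using rq by simp
  qed
  have eR: "e \<notin> Q - {q}"
  proof
    assume "e \<in> Q - {q}"
    then have "e * e = 0" using oth by blast
    then show False using ee e0 by simp
  qed
  have fR: "f \<notin> Q - {q}"
  proof
    assume "f \<in> Q - {q}"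
    then have "f * f = 0" using oth by blast
    then show False using ff f0 by simp
  qed
  have ef_ne: "e \<noteq> f"
  proof
    assume "e = f"
    then have "e * e = 0" using ef by simp
    then show False using ee e0 by simp
  qed
  define Q' where "Q' = insert e (insert f (Q - {q}))"
  have "proj_fam p Q'"
    unfolding proj_fam_def
  proof (intro conjI)
    show "finite Q'" unfolding Q'_def using fin by simp
  next
    show "\<forall>r\<in>Q'. projection_elem star r \<and> r \<noteq> 0 \<and> p * r = r \<and> r * p = r"
    proof
    fix r assume "r \<in> Q'"
    then consider "r = e" | "r = f" | "r \<in> Q" unfolding Q'_def by blast
    then show "projection_elem star r \<and> r \<noteq> 0 \<and> p * r = r \<and> r * p = r"
    proof cases
      case 1 then show ?thesis using ee e0 pe unfolding projection_elem_def by simp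
    next
      case 2 then show ?thesis using fst ff f0 pf unfolding projection_elem_def by simp
    next
      case 3 then show ?thesis using mem by blast
    qed
    qed
  next
    show "\<forall>r\<in>Q'. \<forall>r'\<in>Q'. r \<noteq> r' \<longrightarrow> r * r' = 0"
    proof (intro ballI impI)
    fix r r' assume r: "r \<in> Q'" and r': "r' \<in> Q'" and ne: "r \<noteq> r'"
    have cr: "r = e \<or> r = f \<or> r \<in> Q - {q}" using r unfolding Q'_def by blast
    have cr': "r' = e \<or> r' = f \<or> r' \<in> Q - {q}" using r' unfolding Q'_def by blast
    from cr show "r * r' = 0"
    proof (elim disjE)
      assume re: "r = e"
      from cr' show ?thesis
      proof (elim disjE)
        assume "r' = e" then show ?thesis using re ne by simp
      next
        assume "r' = f" then show ?thesis using re ef by simp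
      next
        assume "r' \<in> Q - {q}" then show ?thesis using re oth by blast
      qed
    next
      assume re: "r = f"
      from cr' show ?thesis
      proof (elim disjE)
        assume "r' = e" then show ?thesis using re ef by simp
      next
        assume "r' = f" then show ?thesis using re ne by simp
      next
        assume "r' \<in> Q - {q}" then show ?thesis using re oth by blast
      qed
    next
      assume re: "r \<in> Q - {q}"
      from cr' show ?thesis
      proof (elim disjE)
        assume "r' = e" then show ?thesis using re oth by blast
      next
        assume "r' = f" then show ?thesis using re oth by blast
      next
        assume "r' \<in> Q - {q}" then show ?thesis using re ne orth by blast
      qed
    qed
    qed
  qed
  then have "card Q' \<le> card Q" by (rule max)
  moreover have "card Q' = Suc (Suc (card (Q - {q})))"
    unfolding Q'_def using fin eR fR ef_ne by simp
  moreover have "card (Q - {q}) = card Q - 1" using fin qQ by simp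
  moreover have "card Q \<ge> 1" using fin qQ by (metis One_nat_def Suc_leI card_gt_0_iff empty_iff)
  ultimately show False by simp
qed

end

context unital_cstar_algebra
begin

lemma minimal_corner_sa:
  assumes qp: "projection_elem star q" "q \<noteq> 0"
    and min: "\<And>e. projection_elem star e \<Longrightarrow> q * e = e \<Longrightarrow> e * q = e \<Longrightarrow> e = 0 \<or> e = q"
    and fin: "finite (rspec h)"
    and sa: "star h = h" and qh: "q * h = h" "h * q = h"
  shows "\<exists>t. h = scaleC (complex_of_real t) q"
proof -
  have qq: "q * q = q" using qp unfolding projection_elem_def by blast
  define F where "F = rspec h - {0}"
  have fF: "finite F" using fin unfolding F_def by simp
  have z: "0 \<notin> F" unfolding F_def by blast
  have FS: "F \<subseteq> rspec h" unfolding F_def by blast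
  show ?thesis
  proof (cases "F = {}")
    case True
    have "h = cf h (\<lambda>x. x)" by (rule cf_id[OF sa, symmetric])
    also have "\<dots> = cf h (\<lambda>x. 0)"
    proof (rule cf_local[OF sa continuous_on_id continuous_on_const])
      fix x assume "x \<in> rspec h"
      then show "x = 0" using True unfolding F_def by blast
    qed
    also have "\<dots> = scaleC (complex_of_real 0) q" using cf_const[OF sa, of 0] by simp
    finally show ?thesis by blast
  next
    case False
    then obtain l where l: "l \<in> F" by blast
    show ?thesis
    proof (rule bump_family[OF sa fF FS z])
      fix \<delta> :: real
      assume d0: "\<delta> > 0" and b0: "\<And>s. s \<in> F \<Longrightarrow> bf \<delta> s 0 = 0"
        and p2: "\<And>s s'. s \<in> F \<Longrightarrow> s' \<in> F \<Longrightarrow> s \<noteq> s' \<Longrightarrow> bf \<delta> s s' = 0"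
        and p3: "\<And>s. s \<in> F \<Longrightarrow> positive_elem scaleC star (cf h (bf \<delta> s)) \<and> cf h (bf \<delta> s) \<noteq> 0
          \<and> star (cf h (bf \<delta> s)) = cf h (bf \<delta> s)"
        and p4: "\<And>s s'. s \<in> F \<Longrightarrow> s' \<in> F \<Longrightarrow> s \<noteq> s' \<Longrightarrow> cf h (bf \<delta> s) * cf h (bf \<delta> s') = 0"
        and p5: "inj_on (\<lambda>s. cf h (bf \<delta> s)) F"
      have eq_q: "cf h (bf \<delta> s) = q" if s: "s \<in> F" for s
      proof -
        define e where "e = cf h (bf \<delta> s)"
        have est: "star e = e" and e0: "e \<noteq> 0" unfolding e_def using p3[OF s] by auto
        have "e * e = cf h (\<lambda>x. bf \<delta> s x * bf \<delta> s x)" unfolding e_def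
          by (rule cf_mult[OF sa bf_cont bf_cont, symmetric])
        also have "\<dots> = cf h (bf \<delta> s)"
        proof (rule cf_local[OF sa _ bf_cont])
          show "continuous_on UNIV (\<lambda>x. bf \<delta> s x * bf \<delta> s x)" by (intro continuous_intros bf_cont)
          fix x assume x: "x \<in> rspec h"
          have "bf \<delta> s x = 0 \<or> bf \<delta> s x = 1"
          proof (cases "x = 0")
            case True then show ?thesis using b0[OF s] by simp
          next
            case False
            then have xF: "x \<in> F" using x unfolding F_def by blast
            show ?thesis
            proof (cases "x = s")
              case True then show ?thesis using bf_center[OF d0] by simp
            next
              case False then show ?thesis using p2[OF s xF] by simp
            qed
          qed
          then show "bf \<delta> s x * bf \<delta> s x = bf \<delta> s x" by auto
        qed
        finally have ee: "e * e = e" unfolding e_def .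
        have qe: "q * e = e \<and> e * q = e" unfolding e_def by (rule cf_corner[OF sa qh bf_cont b0[OF s]])
        have "projection_elem star e" unfolding projection_elem_def using est ee by simp
        then have "e = 0 \<or> e = q" using min qe by blast
        then show ?thesis using e0 unfolding e_def by blast
      qed
      have single: "x \<in> rspec h \<Longrightarrow> x = 0 \<or> x = l" for x
      proof -
        assume x: "x \<in> rspec h"
        show "x = 0 \<or> x = l"
        proof (rule ccontr)
          assume "\<not> (x = 0 \<or> x = l)"
          then have xF: "x \<in> F" and xl: "x \<noteq> l" using x unfolding F_def by auto
          have "cf h (bf \<delta> x) * cf h (bf \<delta> l) = 0" by (rule p4[OF xF l xl])
          then have "q * q = 0" using eq_q[OF xF] eq_q[OF l] by simp
          then show False using qq qp by simp
        qed
      qed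
      have "h = cf h (\<lambda>x. x)" by (rule cf_id[OF sa, symmetric])
      also have "\<dots> = cf h (\<lambda>x. l * bf \<delta> l x)"
      proof (rule cf_local[OF sa continuous_on_id])
        show "continuous_on UNIV (\<lambda>x. l * bf \<delta> l x)" by (intro continuous_intros bf_cont)
        fix x assume x: "x \<in> rspec h"
        show "x = l * bf \<delta> l x"
          using single[OF x] b0[OF l] bf_center[OF d0, of l] by auto
      qed
      also have "\<dots> = scaleC (complex_of_real l) (cf h (bf \<delta> l))" by (rule cf_scale[OF sa bf_cont])
      also have "\<dots> = scaleC (complex_of_real l) q" using eq_q[OF l] by simp
      finally show ?thesis by blast
    qed
  qed
qed

lemma minimal_corner:
  assumes qp: "projection_elem star q" "q \<noteq> 0"
    and min: "\<And>e. projection_elem star e \<Longrightarrow> q * e = e \<Longrightarrow> e * q = e \<Longrightarrow> e = 0 \<or> e = q"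
    and fin: "\<And>h. star h = h \<Longrightarrow> q * h = h \<Longrightarrow> h * q = h \<Longrightarrow> finite (rspec h)"
    and x: "q * x = x" "x * q = x"
  shows "\<exists>c. x = scaleC c q"
proof -
  have qs: "star q = q" using qp unfolding projection_elem_def by blast
  have sx: "q * star x = star x" "star x * q = star x"
  proof -
    have "star (x * q) = q * star x" by (simp add: star_mult qs)
    then show "q * star x = star x" using x by simp
    have "star (q * x) = star x * q" by (simp add: star_mult qs)
    then show "star x * q = star x" using x by simp
  qed
  define u where "u = scaleC (1/2) (x + star x)"
  define v where "v = scaleC (- \<i> / 2) (x - star x)"
  have ust: "star u = u" unfolding u_def by (simp add: star_scaleC star_add star_star add.commute)
  have vst: "star v = v"
  proof -
    have "star v = scaleC (\<i> / 2) (star x - x)" unfolding v_def by (simp add: star_scaleC star_diff star_star)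
    also have "\<dots> = scaleC (- \<i> / 2) (x - star x)"
      by (simp add: scaleC_diff_right scaleC_minus_left)
    finally show ?thesis unfolding v_def .
  qed
  have qu: "q * u = u" "u * q = u" unfolding u_def
    by (simp_all add: scaleC_mult_right[symmetric] scaleC_mult_left[symmetric] distrib_left distrib_right x sx)
  have qv: "q * v = v" "v * q = v" unfolding v_def
    by (simp_all add: scaleC_mult_right[symmetric] scaleC_mult_left[symmetric] right_diff_distrib left_diff_distrib x sx)
  obtain a where a: "u = scaleC (complex_of_real a) q"
    using minimal_corner_sa[OF qp min fin[OF ust qu] ust qu] by blast
  obtain b where b: "v = scaleC (complex_of_real b) q"
    using minimal_corner_sa[OF qp min fin[OF vst qv] vst qv] by blast
  have "x = u + scaleC \<i> v"
  proof -
    have "u + scaleC \<i> v = scaleC (1/2) (x + star x) + scaleC (1/2) (x - star x)"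
      unfolding u_def v_def by (simp add: scaleC_scaleC)
    also have "\<dots> = x"
      by (simp add: scaleC_add_right scaleC_diff_right scaleC_add_left[symmetric])
    finally show ?thesis by simp
  qed
  also have "\<dots> = scaleC (complex_of_real a + \<i> * complex_of_real b) q"
    unfolding a b by (simp add: scaleC_scaleC scaleC_add_left)
  finally show ?thesis by blast
qed

lemma offdiag:
  assumes q: "projection_elem star q" and q': "projection_elem star q'"
    and cq: "\<And>x. q * x = x \<Longrightarrow> x * q = x \<Longrightarrow> \<exists>c. x = scaleC c q"
    and cq': "\<And>x. q' * x = x \<Longrightarrow> x * q' = x \<Longrightarrow> \<exists>c. x = scaleC c q'"
  shows "\<exists>y. q * y = y \<and> y * q' = y \<and> (\<forall>z. q * z = z \<and> z * q' = z \<longrightarrow> (\<exists>c. z = scaleC c y))"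
proof (cases "\<exists>y. q * y = y \<and> y * q' = y \<and> y \<noteq> 0")
  case False
  show ?thesis
  proof (rule exI[of _ 0], intro conjI allI impI)
    show "q * 0 = 0" "0 * q' = 0" by simp_all
    fix z assume "q * z = z \<and> z * q' = z"
    then have "z = 0" using False by blast
    then show "\<exists>c. z = scaleC c 0" by simp
  qed
next
  case True
  then obtain y where y: "q * y = y" "y * q' = y" "y \<noteq> 0" by blast
  have qs: "star q = q" using q unfolding projection_elem_def by blast
  have q's: "star q' = q'" using q' unfolding projection_elem_def by blast
  have sy: "q' * star y = star y" "star y * q = star y"
  proof -
    have "star (y * q') = q' * star y" by (simp add: star_mult q's)
    then show "q' * star y = star y" using y by simp
    have "star (q * y) = star y * q" by (simp add: star_mult qs)
    then show "star y * q = star y" using y by simp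
  qed
  have "q' * (star y * y) = star y * y" "(star y * y) * q' = star y * y"
    using sy y by (simp_all add: mult.assoc[symmetric]) (simp add: mult.assoc)
  then obtain c where c: "star y * y = scaleC c q'" using cq' by blast
  have c0: "c \<noteq> 0"
  proof
    assume "c = 0"
    then have "star y * y = 0" using c by simp
    then have "norm y ^ 2 = 0" using cstar_identity[of y] by simp
    then show False using y(3) by simp
  qed
  show ?thesis
  proof (rule exI[of _ y], intro conjI allI impI)
    show "q * y = y" "y * q' = y" using y by auto
    fix z assume z: "q * z = z \<and> z * q' = z"
    have "q * (z * star y) = z * star y" "(z * star y) * q = z * star y"
      using z sy by (simp_all add: mult.assoc[symmetric]) (simp add: mult.assoc)
    then obtain d where d: "z * star y = scaleC d q" using cq by blast
    have "z = z * q'" using z by simp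
    also have "\<dots> = z * scaleC (inverse c) (star y * y)" using c c0 by (simp add: scaleC_scaleC)
    also have "\<dots> = scaleC (inverse c) ((z * star y) * y)" by (simp add: scaleC_mult_right mult.assoc)
    also have "\<dots> = scaleC (inverse c * d) y" unfolding d
      by (simp add: scaleC_mult_left[symmetric] scaleC_scaleC y)
    finally show "\<exists>c. z = scaleC c y" by blast
  qed
qed

lemma corner_family:
  assumes pp: "projection_elem star p" "p \<noteq> 0" and inf: "cinfinite_dim scaleC (corner p)"
  shows "\<exists>C. good_fam p C \<and> card C \<ge> n"
proof (rule ccontr)
  assume NF: "\<not> (\<exists>C. good_fam p C \<and> card C \<ge> n)"
  have pp2: "star p = p" "p * p = p" using pp unfolding projection_elem_def by auto
  have finH: "finite (rspec h)" if h3: "star h = h" "p * h = h" "h * p = h" for h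
  proof (rule ccontr)
    assume inf: "\<not> finite (rspec h)"
    obtain C where C: "good_fam p C" "card C = n" using infinite_spec_family[OF h3 inf, of n] by blast
    then have "good_fam p C \<and> card C \<ge> n" by simp
    with NF show False by blast
  qed
  have small: "card Q < n" if "proj_fam p Q" for Q
  proof (rule ccontr)
    assume "\<not> card Q < n"
    then have "good_fam p Q \<and> card Q \<ge> n" using proj_fam_good[OF that] by simp
    with NF show False by blast
  qed
  have e: "proj_fam p {}" unfolding proj_fam_def by simp
  have sm: "\<forall>y. proj_fam p y \<longrightarrow> card y < n" using small by blast
  have "\<exists>x. proj_fam p x \<and> (\<forall>y. proj_fam p y \<longrightarrow> card y \<le> card x)"
    by (rule Lattices_Big.ex_has_greatest_nat[of "proj_fam p" "{}" card n, OF e sm])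
  then obtain Q where fam: "proj_fam p Q" and max0: "\<forall>Q'. proj_fam p Q' \<longrightarrow> card Q' \<le> card Q"
    by blast
  have max: "card Q' \<le> card Q" if "proj_fam p Q'" for Q' using max0 that by blast
  have fin: "finite Q" using fam unfolding proj_fam_def by blast
  have mem: "projection_elem star q \<and> q \<noteq> 0 \<and> p * q = q \<and> q * p = q" if "q \<in> Q" for q
    using fam that unfolding proj_fam_def by blast
  have sumQ: "(\<Sum>q\<in>Q. q) = p" by (rule max_proj_sum[OF pp(1) fam max])
  have cq: "\<exists>c. x = scaleC c q" if qQ: "q \<in> Q" and x: "q * x = x" "x * q = x" for q x
  proof (rule minimal_corner)
    show "projection_elem star q" "q \<noteq> 0" using mem[OF qQ] by auto
    show "e = 0 \<or> e = q" if "projection_elem star e" "q * e = e" "e * q = e" for e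
      by (rule max_proj_minimal[OF fam max qQ that])
    show "finite (rspec h)" if h: "star h = h" "q * h = h" "h * q = h" for h
    proof (rule finH[OF h(1)])
      have pq: "p * q = q" "q * p = q" using mem[OF qQ] by auto
      have "p * h = (p * q) * h" using h by (simp add: mult.assoc)
      then show "p * h = h" using pq h by simp
      have "h * p = h * (q * p)" using h by (simp add: mult.assoc[symmetric])
      then show "h * p = h" using pq h by simp
    qed
  qed (use x in auto)
  define yy where "yy q q' = (SOME y. q * y = y \<and> y * q' = y \<and> (\<forall>z. q * z = z \<and> z * q' = z \<longrightarrow> (\<exists>c. z = scaleC c y)))" for q q'
  have yy: "q * yy q q' = yy q q' \<and> yy q q' * q' = yy q q' \<and> (\<forall>z. q * z = z \<and> z * q' = z \<longrightarrow> (\<exists>c. z = scaleC c (yy q q')))"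
    if "q \<in> Q" "q' \<in> Q" for q q'
  proof -
    have "\<exists>y. q * y = y \<and> y * q' = y \<and> (\<forall>z. q * z = z \<and> z * q' = z \<longrightarrow> (\<exists>c. z = scaleC c y))"
    proof (rule offdiag)
      show "projection_elem star q" using mem[OF that(1)] by blast
      show "projection_elem star q'" using mem[OF that(2)] by blast
      show "\<exists>c. x = scaleC c q" if "q * x = x" "x * q = x" for x by (rule cq[OF \<open>q \<in> Q\<close> that])
      show "\<exists>c. x = scaleC c q'" if "q' * x = x" "x * q' = x" for x by (rule cq[OF \<open>q' \<in> Q\<close> that])
    qed
    then show ?thesis unfolding yy_def by (rule someI_ex)
  qed
  define T where "T = (\<lambda>(q, q'). yy q q') ` (Q \<times> Q)"
  have fT: "finite T" unfolding T_def using fin by simp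
  have Tsub: "T \<subseteq> corner p"
  proof
    fix y assume "y \<in> T"
    then obtain pr where pr: "pr \<in> Q \<times> Q" "y = (\<lambda>(q, q'). yy q q') pr" unfolding T_def by blast
    obtain q q' where pq0: "pr = (q, q')" by (cases pr)
    have qq: "q \<in> Q" "q' \<in> Q" using pr(1) pq0 by auto
    have yq: "y = yy q q'" using pr(2) pq0 by simp
    have y1: "q * y = y" "y * q' = y" using yy[OF qq] yq by auto
    have pq: "p * q = q" "q' * p = q'" using mem qq by auto
    have "p * y = (p * q) * y" using y1 by (simp add: mult.assoc)
    then have py: "p * y = y" using pq y1 by simp
    have "y * p = y * (q' * p)" using y1 by (simp add: mult.assoc[symmetric])
    then have yp: "y * p = y" using pq y1 by simp
    have "y = p * y * p" using py yp by simp
    then show "y \<in> corner p" unfolding corner_def by blast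
  qed
  have span: "corner p \<subseteq> cspan_fin scaleC T"
  proof
    fix x assume "x \<in> corner p"
    then obtain x0 where x0: "x = p * x0 * p" unfolding corner_def by blast
    have "p * x * p = x" unfolding x0 using pp2 by (simp add: mult.assoc[symmetric]) (simp add: mult.assoc)
    then have "x = (\<Sum>q\<in>Q. q) * x * (\<Sum>q'\<in>Q. q')" using sumQ by simp
    also have "\<dots> = (\<Sum>q\<in>Q. q * x) * (\<Sum>q'\<in>Q. q')" by (simp add: sum_distrib_right)
    also have "\<dots> = (\<Sum>q\<in>Q. q * x * (\<Sum>q'\<in>Q. q'))" by (rule sum_distrib_right)
    also have "\<dots> = (\<Sum>q\<in>Q. \<Sum>q'\<in>Q. q * x * q')" by (simp only: sum_distrib_left)
    finally have xs: "x = (\<Sum>q\<in>Q. \<Sum>q'\<in>Q. q * x * q')" .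
    have "(\<Sum>q\<in>Q. \<Sum>q'\<in>Q. q * x * q') \<in> cspan_fin scaleC T"
    proof (intro cspan_sum fin)
      fix q q' assume qQ: "q \<in> Q" and q'Q: "q' \<in> Q"
      have qi: "q * q = q" "q' * q' = q'" using mem qQ q'Q unfolding projection_elem_def by auto
      have "q * (q * x * q') = q * x * q'" using qi by (simp add: mult.assoc[symmetric])
      moreover have "(q * x * q') * q' = q * x * q'" using qi by (simp add: mult.assoc)
      ultimately obtain c where c: "q * x * q' = scaleC c (yy q q')" using yy[OF qQ q'Q] by blast
      have "yy q q' \<in> T" unfolding T_def by (rule image_eqI[where x="(q, q')"]) (simp_all add: qQ q'Q)
      then have "yy q q' \<in> cspan_fin scaleC T" by (rule cspan_elem[OF fT])
      then show "q * x * q' \<in> cspan_fin scaleC T" unfolding c by (rule cspan_scale)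
    qed
    then show "x \<in> cspan_fin scaleC T" using xs by simp
  qed
  show False using inf fT Tsub span unfolding cinfinite_dim_def by blast
qed

end

context unital_cstar_algebra
begin

lemma main_n:
  fixes b :: 'a and \<epsilon> :: real and n :: nat
  assumes hyp: "\<And>e. projection_elem star e \<Longrightarrow> e \<noteq> 0 \<Longrightarrow> cinfinite_dim scaleC (corner e)"
    and bpos: "positive_elem scaleC star b" and nb: "norm b = 1" and eps: "\<epsilon> > 0"
  shows "\<exists>bs :: nat \<Rightarrow> 'a.
           (\<forall>j\<in>{1..n}. positive_elem scaleC star (bs j) \<and> norm (bs j) = 1 \<and>
                        b * bs j = bs j * b \<and> norm (b * bs j) \<ge> 1 - \<epsilon>) \<and>
           (\<forall>i\<in>{1..n}. \<forall>j\<in>{1..n}. i \<noteq> j \<longrightarrow> bs i * bs j = 0)"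
proof -
  have bsa: "star b = b" using bpos unfolding positive_elem_def by blast
  have rs: "0 \<le> x \<and> x \<le> 1" if "x \<in> rspec b" for x
  proof
    have "complex_of_real x \<in> spec b" using that unfolding rspec_def by simp
    then show "0 \<le> x" using bpos unfolding positive_elem_def by force
    show "x \<le> 1" using rspec_bound[OF that] nb by simp
  qed
  define \<epsilon>' where "\<epsilon>' = min \<epsilon> (1/2)"
  have e1: "0 < \<epsilon>'" "\<epsilon>' \<le> 1/2" "\<epsilon>' \<le> \<epsilon>" using eps unfolding \<epsilon>'_def by auto
  define a where "a = 1 - \<epsilon>'"
  have a: "1/2 \<le> a" "a < 1" "0 < a" using e1 unfolding a_def by auto
  define G where "G = {x \<in> rspec b. a < x}"
  show ?thesis
  proof (cases "\<exists>S. S \<subseteq> G \<and> finite S \<and> card S = n")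
    case True
    then obtain S where S: "S \<subseteq> G" "finite S" "card S = n" by blast
    have SS: "S \<subseteq> rspec b" using S(1) unfolding G_def by blast
    have aS: "a \<notin> S" using S(1) unfolding G_def by blast
    show ?thesis
    proof (rule bump_family[OF bsa S(2) SS aS])
      fix \<delta> :: real
      assume d0: "\<delta> > 0" and b0: "\<And>s. s \<in> S \<Longrightarrow> bf \<delta> s a = 0"
        and p2: "\<And>s s'. s \<in> S \<Longrightarrow> s' \<in> S \<Longrightarrow> s \<noteq> s' \<Longrightarrow> bf \<delta> s s' = 0"
        and p3: "\<And>s. s \<in> S \<Longrightarrow> positive_elem scaleC star (cf b (bf \<delta> s)) \<and> cf b (bf \<delta> s) \<noteq> 0
          \<and> star (cf b (bf \<delta> s)) = cf b (bf \<delta> s)"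
        and p4: "\<And>s s'. s \<in> S \<Longrightarrow> s' \<in> S \<Longrightarrow> s \<noteq> s' \<Longrightarrow> cf b (bf \<delta> s) * cf b (bf \<delta> s') = 0"
        and p5: "inj_on (\<lambda>s. cf b (bf \<delta> s)) S"
      define C where "C = (\<lambda>s. cf b (bf \<delta> s)) ` S"
      define g where "g x = 1 / max x a" for x
      have cg: "continuous_on UNIV g" unfolding g_def using a by (intro continuous_intros) (auto simp: max_def)
      have ng: "norm (cf b g) \<le> 1 / a"
      proof (rule cf_norm[OF bsa cg])
        fix x assume "x \<in> rspec b"
        have "a \<le> max x a" by simp
        then show "\<bar>g x\<bar> \<le> 1 / a" unfolding g_def using a by (simp add: frac_le)
      qed
      have key: "(1 - \<epsilon>) * norm c \<le> norm (b * c)" if c: "c \<in> C" for c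
      proof -
        obtain s where s: "s \<in> S" and cs: "c = cf b (bf \<delta> s)" using c unfolding C_def by blast
        have sa': "a < s" using s S(1) unfolding G_def by blast
        have dz: "\<delta> \<le> s - a"
        proof (rule ccontr)
          assume "\<not> \<delta> \<le> s - a"
          then have "\<bar>a - s\<bar> < \<delta>" using sa' by simp
          then have "bf \<delta> s a > 0" unfolding bf_def using d0 by (simp add: field_simps)
          then show False using b0[OF s] by simp
        qed
        have fid: "(\<lambda>x. g x * x * bf \<delta> s x) = bf \<delta> s"
        proof
          fix x
          show "g x * x * bf \<delta> s x = bf \<delta> s x"
          proof (cases "x \<le> a")
            case True
            then have "\<bar>x - s\<bar> \<ge> \<delta>" using dz sa' by simp
            then show ?thesis using bf_zero[OF d0] by simp
          next
            case False
            then have "x > 0" using a by simp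
            then have "g x * x = 1" unfolding g_def using False by simp
            then show ?thesis by simp
          qed
        qed
        have "cf b (bf \<delta> s) = cf b (\<lambda>x. g x * x * bf \<delta> s x)" by (simp only: fid)
        also have "\<dots> = cf b (\<lambda>x. g x * x) * cf b (bf \<delta> s)"
          by (rule cf_mult[OF bsa _ bf_cont]) (intro continuous_intros cg)
        also have "cf b (\<lambda>x. g x * x) = cf b g * b"
          using cf_mult[OF bsa cg continuous_on_id] cf_id[OF bsa] by simp
        finally have e: "cf b (bf \<delta> s) = cf b g * b * cf b (bf \<delta> s)" .
        have e2: "cf b (bf \<delta> s) = cf b g * (b * cf b (bf \<delta> s))" using e unfolding mult.assoc .
        have c2: "c = cf b g * (b * c)" using e2 unfolding cs[symmetric] .
        have "norm c = norm (cf b g * (b * c))" using c2 by (rule arg_cong)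
        also have "\<dots> \<le> norm (cf b g) * norm (b * c)" by (rule norm_mult_ineq)
        finally have "norm c \<le> norm (cf b g) * norm (b * c)" .
        also have "\<dots> \<le> (1 / a) * norm (b * c)" by (intro mult_right_mono ng) simp
        finally have "a * norm c \<le> norm (b * c)" using a by (simp add: field_simps)
        moreover have "(1 - \<epsilon>) * norm c \<le> a * norm c"
          using e1 unfolding a_def by (intro mult_right_mono) auto
        ultimately show ?thesis by linarith
      qed
      show ?thesis
      proof (rule conclude)
        show "finite C" unfolding C_def using S by simp
        show "n \<le> card C" unfolding C_def using card_image[OF p5] S by simp
      next
        fix c assume c: "c \<in> C"
        then obtain s where s: "s \<in> S" and cs: "c = cf b (bf \<delta> s)" unfolding C_def by blast
        have bc: "b * c = c * b" unfolding cs using cf_commute_h[OF bsa bf_cont] by simp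
        have P: "positive_elem scaleC star c" "c \<noteq> 0" unfolding cs using p3[OF s] by auto
        show "positive_elem scaleC star c \<and> c \<noteq> 0 \<and> b * c = c * b \<and> (1 - \<epsilon>) * norm c \<le> norm (b * c)"
          using P bc key[OF c] by blast
      next
        fix c d assume "c \<in> C" "d \<in> C" "c \<noteq> d"
        then obtain s s' where "s \<in> S" "s' \<in> S" "c = cf b (bf \<delta> s)" "d = cf b (bf \<delta> s')"
          unfolding C_def by blast
        moreover then have "s \<noteq> s'" using \<open>c \<noteq> d\<close> by blast
        ultimately show "c * d = 0" using p4 by blast
      qed
    qed
  next
    case False
    have fG: "finite G"
    proof (rule ccontr)
      assume "\<not> finite G"
      then obtain S where "finite S" "card S = n" "S \<subseteq> G" using infinite_arbitrarily_large by blast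
      then show False using False by blast
    qed
    have Gsub: "G \<subseteq> rspec b" unfolding G_def by blast
    have one: "1 \<in> G"
    proof (rule ccontr)
      assume n1: "1 \<notin> G"
      define m where "m = Max (insert a G)"
      have fin: "finite (insert a G)" using fG by simp
      have m_in: "m \<in> insert a G" unfolding m_def using fin by (intro Max_in) auto
      have m1: "m < 1"
      proof (cases "m = a")
        case True then show ?thesis using a by simp
      next
        case False
        then have "m \<in> G" using m_in by simp
        then have "m \<in> rspec b" "m \<noteq> 1" using n1 unfolding G_def by auto
        then show ?thesis using rs by fastforce
      qed
      have "norm b \<le> m"
      proof (rule sa_norm_le_spec[OF bsa])
        show "0 \<le> m" using Max_ge[OF fin, of a] a unfolding m_def by simp
        fix l assume l: "l \<in> spec b"
        then have lr: "l = complex_of_real (Re l)" "Re l \<in> rspec b" using sa_spec_rspec[OF bsa] by auto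
        have "Re l \<le> m"
        proof (cases "a < Re l")
          case True
          then have "Re l \<in> G" using lr unfolding G_def by blast
          then show ?thesis unfolding m_def using fin by simp
        next
          case False
          then show ?thesis using Max_ge[OF fin, of a] unfolding m_def by simp
        qed
        moreover have "0 \<le> Re l" using rs[OF lr(2)] by simp
        ultimately show "cmod l \<le> m" by (subst lr(1)) simp
      qed
      then show False using nb m1 by simp
    qed
    define m where "m = Max (insert a (G - {1}))"
    have finm: "finite (insert a (G - {1}))" using fG by simp
    have m_in: "m \<in> insert a (G - {1})" unfolding m_def using finm by (intro Max_in) auto
    have m1: "m < 1"
    proof (cases "m = a")
      case True then show ?thesis using a by simp
    next
      case False
      then have "m \<in> G - {1}" using m_in by simp
      then have "m \<in> rspec b" "m \<noteq> 1" unfolding G_def by auto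
      then show ?thesis using rs by fastforce
    qed
    have am: "a \<le> m" unfolding m_def using finm by simp
    have gap: "x \<le> m \<or> x = 1" if x: "x \<in> rspec b" for x
    proof (cases "a < x")
      case True
      then have "x \<in> G" using x unfolding G_def by blast
      then show ?thesis using finm unfolding m_def by (cases "x = 1") auto
    next
      case False then show ?thesis using am by simp
    qed
    define ch where "ch x = min 1 (max 0 ((x - m) * inverse (1 - m)))" for x
    have cch: "continuous_on UNIV ch" unfolding ch_def by (intro continuous_intros)
    have ch1: "ch 1 = 1" unfolding ch_def using m1 by simp
    have ch0: "ch x = 0" if "x \<le> m" for x
    proof -
      have "(x - m) * inverse (1 - m) \<le> 0" using that m1 by (simp add: mult_nonpos_nonneg)
      then show ?thesis unfolding ch_def by simp
    qed
    have ch01: "ch x = 0 \<or> (x = 1 \<and> ch x = 1)" if "x \<in> rspec b" for x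
      using gap[OF that] ch0 ch1 by auto
    define p where "p = cf b ch"
    have pst: "star p = p" unfolding p_def by (rule cf_sa[OF bsa cch])
    have pp: "p * p = p"
    proof -
      have "p * p = cf b (\<lambda>x. ch x * ch x)" unfolding p_def by (rule cf_mult[OF bsa cch cch, symmetric])
      also have "\<dots> = p" unfolding p_def
      proof (rule cf_local[OF bsa _ cch])
        show "continuous_on UNIV (\<lambda>x. ch x * ch x)" by (intro continuous_intros cch)
        fix x assume "x \<in> rspec b"
        then show "ch x * ch x = ch x" using ch01 by auto
      qed
      finally show ?thesis .
    qed
    have proj: "projection_elem star p" unfolding projection_elem_def using pst pp by simp
    have p0: "p \<noteq> 0" unfolding p_def
      using cf_nonzero[OF bsa cch, of 1] one Gsub ch1 by auto
    have bp: "b * p = p"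
    proof -
      have "b * p = cf b (\<lambda>x. x * ch x)" unfolding p_def
        using cf_mult[OF bsa continuous_on_id cch] cf_id[OF bsa] by simp
      also have "\<dots> = p" unfolding p_def
      proof (rule cf_local[OF bsa _ cch])
        show "continuous_on UNIV (\<lambda>x. x * ch x)" by (intro continuous_intros cch)
        fix x assume "x \<in> rspec b"
        then show "x * ch x = ch x" using ch01 by auto
      qed
      finally show ?thesis .
    qed
    have pb: "p * b = p" using bp cf_commute_h[OF bsa cch] unfolding p_def by simp
    obtain C where C: "good_fam p C" "card C \<ge> n" using corner_family[OF proj p0 hyp[OF proj p0]] by blast
    have finC: "finite C" using C(1) unfolding good_fam_def by blast
    have memC: "positive_elem scaleC star c \<and> c \<noteq> 0 \<and> p * c = c \<and> c * p = c" if "c \<in> C" for c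
      using C(1) that unfolding good_fam_def by blast
    show ?thesis
    proof (rule conclude[OF finC C(2)])
      fix c assume c: "c \<in> C"
      have pc: "p * c = c" "c * p = c" using memC[OF c] by auto
      have bc: "b * c = c"
      proof -
        have "b * c = (b * p) * c" using pc by (simp add: mult.assoc)
        then show ?thesis using bp pc by simp
      qed
      have cb: "c * b = c"
      proof -
        have "c * b = c * (p * b)" using pc by (simp add: mult.assoc[symmetric])
        then show ?thesis using pb pc by simp
      qed
      have "0 \<le> \<epsilon> * norm c" using eps by simp
      then have "(1 - \<epsilon>) * norm c \<le> norm c" by (simp add: algebra_simps)
      then show "positive_elem scaleC star c \<and> c \<noteq> 0 \<and> b * c = c * b \<and> (1 - \<epsilon>) * norm c \<le> norm (b * c)"
        using memC[OF c] bc cb by simp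
    next
      fix c d assume "c \<in> C" "d \<in> C" "c \<noteq> d"
      then show "c * d = 0" using C(1) unfolding good_fam_def by blast
    qed
  qed
qed

end

theorem lemma1p4:
  fixes scaleC :: "complex \<Rightarrow> 'a::{real_normed_algebra_1, banach} \<Rightarrow> 'a"
    and star :: "'a \<Rightarrow> 'a"
    and b :: 'a and \<epsilon> :: real
  assumes "unital_cstar_algebra scaleC star"
    and "\<And>e. projection_elem star e \<Longrightarrow> e \<noteq> 0 \<Longrightarrow> cinfinite_dim scaleC (corner e)"
    and "positive_elem scaleC star b" and "norm b = 1"
    and "\<epsilon> > 0"
  shows "\<forall>n::nat. n \<ge> 1 \<longrightarrow> (\<exists>bs :: nat \<Rightarrow> 'a.
           (\<forall>j\<in>{1..n}. positive_elem scaleC star (bs j) \<and> norm (bs j) = 1 \<and>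
                        b * bs j = bs j * b \<and> norm (b * bs j) \<ge> 1 - \<epsilon>) \<and>
           (\<forall>i\<in>{1..n}. \<forall>j\<in>{1..n}. i \<noteq> j \<longrightarrow> bs i * bs j = 0))"
proof (intro allI impI)
  fix n :: nat
  interpret unital_cstar_algebra scaleC star by (rule assms(1))
  show "\<exists>bs :: nat \<Rightarrow> 'a.
           (\<forall>j\<in>{1..n}. positive_elem scaleC star (bs j) \<and> norm (bs j) = 1 \<and>
                        b * bs j = bs j * b \<and> norm (b * bs j) \<ge> 1 - \<epsilon>) \<and>
           (\<forall>i\<in>{1..n}. \<forall>j\<in>{1..n}. i \<noteq> j \<longrightarrow> bs i * bs j = 0)"
    by (rule main_n[OF assms(2-5)])
qed


end
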